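(* Let $\delta>0$, $\gamma>0$ and let $\bar{\mathcal X}^{\delta,\gamma}(t)=\bar M(I_{\delta,\gamma}(t))$. Its state probabilities $p_{\bar{\mathcal X}}(\bar n,t)=\Pr\{\bar{\mathcal X}^{\delta,\gamma}(t)=\bar n\}$, $\bar n\in\mathbb{N}_0^q$, satisfy $$\Big(\frac{\partial^2}{\partial t^2}-2\delta\gamma\frac{\partial}{\partial t}\Big)p_{\bar{\mathcal X}}(\bar n,t)=2\delta^2\lambda\,p_{\bar{\mathcal X}}(\bar n,t)-2\delta^2\sum_{i=1}^q\sum_{j=1}^{k_i}\lambda_{ij}\,p_{\bar{\mathcal X}}(\bar n-\bar\epsilon_i^{j},t).$$
   Context: Fix $q\ge1$, integers $k_1,\dots,k_q\ge1$, $\lambda_{ij}>0$ ($1\le i\le q$, $1\le j\le k_i$), $\lambda=\sum_{i,j}\lambda_{ij}$. The MGCP $\bar M(t)=(M_1(t),\dots,M_q(t))$ is the $\mathbb{N}_0^q$-valued process with $\bar M(0)=\bar0$, independent stationary increments and transition probabilities $\Pr\{\bar M(t+h)=\bar n+\bar j\mid\bar M(t)=\bar n\}=\lambda_{ij}h+o(h)$ if $\bar j=\bar\epsilon_i^{j}$, $1-\lambda h+o(h)$ if $\bar j=\bar0$, $o(h)$ otherwise, where $\bar\epsilon_i^{j}\in\mathbb{N}_0^q$ has $i$th entry $j$ and other entries $0$. $\{I_{\delta,\gamma}(t)\}$ is an inverse Gaussian subordinator independent of $\bar M$, with density $g(x,t)=\frac{\delta t}{\sqrt{2\pi x^3}}\exp\big(\delta\gamma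 t-\frac12(\delta^2t^2x^{-1}+\gamma^2x)\big)$, $x>0$, and $\mathbb{E}e^{-sI_{\delta,\gamma}(t)}=\exp(-\delta t(\sqrt{2s+\gamma^2}-\gamma))$. Convention: $p_{\bar{\mathcal X}}(\bar n-\bar m,t)=0$ if some component of $\bar n-\bar m$ is negative. *)

theory Defs
  imports "HOL-Analysis.Analysis"
begin

text \<open>Indices: components i range over {0..<q} (paper: 1..q); jump sizes j range over {1..k i}.
  Vectors in N_0^q are functions nat => nat of which only the entries i < q matter.\<close>

text \<open>Admissible jump-count vectors for a generalized counting process with jumps 1..kk
  reaching level m: x j counts jumps of size j.\<close>
definition gcp_omega :: "nat \<Rightarrow> nat \<Rightarrow> (nat \<Rightarrow> nat) set" where
  "gcp_omega kk m = {x. (\<forall>j. j \<notin> {1..kk} \<longrightarrow> x j = 0) \<and> (\<Sum>j=1..kk. j * x j) = m}"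

text \<open>State probability of the i-th component M_i(t) (a generalized counting process:
  M_i = sum_j j N_ij with independent Poisson N_ij of rates lam i j).\<close>
definition gcp_pmf :: "nat \<Rightarrow> (nat \<Rightarrow> real) \<Rightarrow> nat \<Rightarrow> real \<Rightarrow> real" where
  "gcp_pmf kk lam m t =
     (\<Sum>x\<in>gcp_omega kk m. \<Prod>j=1..kk. (lam j * t) ^ x j / fact (x j) * exp (- lam j * t))"

definition mgcp_pmf :: "nat \<Rightarrow> (nat \<Rightarrow> nat) \<Rightarrow> (nat \<Rightarrow> nat \<Rightarrow> real) \<Rightarrow> (nat \<Rightarrow> nat) \<Rightarrow> real \<Rightarrow> real" where
  "mgcp_pmf q k lam n t = (\<Prod>i<q. gcp_pmf (k i) (lam i) (n i) t)"

definition ig_density :: "real \<Rightarrow> real \<Rightarrow> real \<Rightarrow> real \<Rightarrow> real" where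
  "ig_density \<delta> \<gamma> x t =
     \<delta> * t / sqrt (2 * pi * x ^ 3) * exp (\<delta> * \<gamma> * t - (\<delta>\<^sup>2 * t\<^sup>2 / x + \<gamma>\<^sup>2 * x) / 2)"

text \<open>State probabilities of the time-changed process M(I(t)), with I independent of M:
  p_X(n,t) = int_0^infty p_M(n,x) g(x,t) dx.\<close>
definition tc_pmf :: "nat \<Rightarrow> (nat \<Rightarrow> nat) \<Rightarrow> (nat \<Rightarrow> nat \<Rightarrow> real) \<Rightarrow> real \<Rightarrow> real \<Rightarrow> (nat \<Rightarrow> nat) \<Rightarrow> real \<Rightarrow> real" where
  "tc_pmf q k lam \<delta> \<gamma> n t =
     (LINT x:{0<..}|lborel. mgcp_pmf q k lam n x * ig_density \<delta> \<gamma> x t)"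

definition tc_pmf_shift :: "nat \<Rightarrow> (nat \<Rightarrow> nat) \<Rightarrow> (nat \<Rightarrow> nat \<Rightarrow> real) \<Rightarrow> real \<Rightarrow> real \<Rightarrow> (nat \<Rightarrow> nat) \<Rightarrow> nat \<Rightarrow> nat \<Rightarrow> real \<Rightarrow> real" where
  "tc_pmf_shift q k lam \<delta> \<gamma> n i j t =
     (if j \<le> n i then tc_pmf q k lam \<delta> \<gamma> (n(i := n i - j)) t else 0)"

end

theory Submission
  imports Defs "HOL-Real_Asymp.Real_Asymp"
begin

lemma gcp_omega_finite: "finite (gcp_omega kk m)"
proof -
  have "gcp_omega kk m \<subseteq> {f. \<forall>x. (x \<in> {1..kk} \<longrightarrow> f x \<in> {0..m}) \<and> (x \<notin> {1..kk} \<longrightarrow> f x = 0)}"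
  proof
    fix f assume f: "f \<in> gcp_omega kk m"
    have "f x \<le> m" if "x \<in> {1..kk}" for x
    proof -
      have "f x \<le> x * f x" using that by auto
      also have "\<dots> \<le> (\<Sum>j=1..kk. j * f j)" using that by (intro member_le_sum) auto
      finally show ?thesis using f by (simp add: gcp_omega_def)
    qed
    then show "f \<in> {f. \<forall>x. (x \<in> {1..kk} \<longrightarrow> f x \<in> {0..m}) \<and> (x \<notin> {1..kk} \<longrightarrow> f x = 0)}"
      using f by (auto simp: gcp_omega_def)
  qed
  moreover have "finite {f. \<forall>x. (x \<in> {1..kk} \<longrightarrow> f x \<in> {0..m}) \<and> (x \<notin> {1..kk} \<longrightarrow> f x = (0::nat))}"
    by (rule finite_set_of_finite_funs) auto
  ultimately show ?thesis by (rule finite_subset)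
qed

definition pp :: "real \<Rightarrow> nat \<Rightarrow> real" where
  "pp y r = y ^ r / fact r * exp (- y)"

definition ppm :: "real \<Rightarrow> nat \<Rightarrow> real" where
  "ppm y r = (if r = 0 then 0 else pp y (r - 1))"

lemma pp_deriv: "((\<lambda>t. pp (c * t) r) has_real_derivative c * (ppm (c * t) r - pp (c * t) r)) (at t)"
proof (cases r)
  case 0
  then show ?thesis unfolding pp_def ppm_def
    by (auto intro!: derivative_eq_intros)
next
  case (Suc s)
  have d1: "((\<lambda>t. (c*t)^Suc s) has_real_derivative (1 + real s) * (c * (c*t)^s)) (at t)"
    by (rule DERIV_power_Suc) (auto intro!: derivative_eq_intros)
  have d2: "((\<lambda>t. exp (- (c*t))) has_real_derivative exp (- (c*t)) * (- c)) (at t)"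
    by (auto intro!: derivative_eq_intros)
  note d3 = DERIV_mult[OF DERIV_cdivide[OF d1, of "fact (Suc s)"] d2]
  have f: "(fact (Suc s)::real) = (1 + real s) * fact s" by (simp add: fact_Suc)
  have p: "(1 + real s) > 0" by simp
  have e1: "(1 + real s) * (c * (c*t)^s) / fact (Suc s) = c * (c*t)^s / fact s"
    unfolding f using p by simp
  show ?thesis unfolding pp_def ppm_def Suc
    by (rule DERIV_cong[OF d3]) (unfold e1, simp add: algebra_simps)

qed

lemma sum_upd_nat:
  assumes "j \<in> {1..kk}"
  shows "(\<Sum>l=1..kk. l * (y(j := v)) l) = (\<Sum>l=1..kk. l * y l) - j * y j + j * (v::nat)"
proof -
  have "(\<Sum>l=1..kk. l * (y(j := v)) l) = j * v + (\<Sum>l\<in>{1..kk}-{j}. l * (y(j := v)) l)"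
    using assms by (subst sum.remove[of _ j]) auto
  also have "(\<Sum>l\<in>{1..kk}-{j}. l * (y(j := v)) l) = (\<Sum>l\<in>{1..kk}-{j}. l * y l)"
    by (rule sum.cong) auto
  also have "(\<Sum>l=1..kk. l * y l) = j * y j + (\<Sum>l\<in>{1..kk}-{j}. l * y l)"
    using assms by (subst sum.remove[of _ j]) auto
  ultimately show ?thesis by simp
qed

lemma omega_reindex:
  assumes j: "j \<in> {1..kk}"
  shows "(\<Sum>x\<in>{x\<in>gcp_omega kk m. x j \<ge> 1}. G (x(j := x j - 1)))
       = (if j \<le> m then (\<Sum>y\<in>gcp_omega kk (m - j). G y) else 0)"
proof (cases "j \<le> m")
  case True
  let ?h = "\<lambda>y. y(j := Suc (y j))"
  have bij: "bij_betw ?h (gcp_omega kk (m - j)) {x\<in>gcp_omega kk m. x j \<ge> 1}"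
  proof (rule bij_betwI[where g = "\<lambda>x. x(j := x j - 1)"])
    show "?h \<in> gcp_omega kk (m - j) \<rightarrow> {x\<in>gcp_omega kk m. x j \<ge> 1}"
    proof
      fix y assume y: "y \<in> gcp_omega kk (m - j)"
      have le: "j * y j \<le> (\<Sum>l=1..kk. l * y l)" using j by (intro member_le_sum) auto
      have "(\<Sum>l=1..kk. l * (?h y) l) = m"
        using y True j le by (subst sum_upd_nat[OF j]) (auto simp: gcp_omega_def)
      then show "?h y \<in> {x\<in>gcp_omega kk m. x j \<ge> 1}"
        using y j by (auto simp: gcp_omega_def)
    qed
    show "(\<lambda>x. x(j := x j - 1)) \<in> {x\<in>gcp_omega kk m. x j \<ge> 1} \<rightarrow> gcp_omega kk (m - j)"
    proof
      fix x assume x: "x \<in> {x\<in>gcp_omega kk m. x j \<ge> 1}"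
      have le: "j * x j \<le> (\<Sum>l=1..kk. l * x l)" using j by (intro member_le_sum) auto
      have "(\<Sum>l=1..kk. l * (x(j := x j - 1)) l) = m - j"
        using x j le by (subst sum_upd_nat[OF j]) (auto simp: gcp_omega_def algebra_simps)
      then show "x(j := x j - 1) \<in> gcp_omega kk (m - j)"
        using x j by (auto simp: gcp_omega_def)
    qed
  qed auto
  have "(\<Sum>x\<in>{x\<in>gcp_omega kk m. x j \<ge> 1}. G (x(j := x j - 1))) = (\<Sum>y\<in>gcp_omega kk (m - j). G ((?h y)(j := ?h y j - 1)))"
    using sum.reindex_bij_betw[OF bij, of "\<lambda>x. G (x(j := x j - 1))"] by simp
  also have "\<dots> = (\<Sum>y\<in>gcp_omega kk (m - j). G y)" by simp
  finally show ?thesis using True by simp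
next
  case False
  have "{x\<in>gcp_omega kk m. x j \<ge> 1} = {}"
  proof (rule ccontr)
    assume "{x\<in>gcp_omega kk m. x j \<ge> 1} \<noteq> {}"
    then obtain x where x: "x \<in> gcp_omega kk m" "x j \<ge> 1" by auto
    have "j \<le> j * x j" using x by simp
    also have "\<dots> \<le> (\<Sum>l=1..kk. l * x l)" using j by (intro member_le_sum) auto
    finally show False using x False by (simp add: gcp_omega_def)
  qed
  then show ?thesis using False by (simp only: sum.empty) simp
qed

definition TT :: "nat \<Rightarrow> (nat \<Rightarrow> real) \<Rightarrow> (nat \<Rightarrow> nat) \<Rightarrow> real \<Rightarrow> real" where
  "TT kk lam x t = (\<Prod>j=1..kk. pp (lam j * t) (x j))"

lemma gcp_TT: "gcp_pmf kk lam m t = (\<Sum>x\<in>gcp_omega kk m. TT kk lam x t)"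
  unfolding gcp_pmf_def TT_def pp_def by simp

lemma TT_shift:
  assumes j: "j \<in> {1..kk}" and xj: "x j \<ge> 1"
  shows "ppm (lam j * t) (x j) * (\<Prod>l\<in>{1..kk}-{j}. pp (lam l * t) (x l)) = TT kk lam (x(j := x j - 1)) t"
proof -
  have "TT kk lam (x(j := x j - 1)) t = pp (lam j * t) (x j - 1) * (\<Prod>l\<in>{1..kk}-{j}. pp (lam l * t) ((x(j := x j - 1)) l))"
    unfolding TT_def using j by (subst prod.remove[of _ j]) auto
  also have "(\<Prod>l\<in>{1..kk}-{j}. pp (lam l * t) ((x(j := x j - 1)) l)) = (\<Prod>l\<in>{1..kk}-{j}. pp (lam l * t) (x l))"
    by (rule prod.cong) auto
  finally have E: "TT kk lam (x(j := x j - 1)) t = pp (lam j * t) (x j - 1) * (\<Prod>l\<in>{1..kk}-{j}. pp (lam l * t) (x l))" .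
  have "x j \<noteq> 0" using xj by simp
  then show ?thesis by (subst E) (simp add: ppm_def)
qed

lemma TT_deriv:
  "((\<lambda>t. TT kk lam x t) has_real_derivative
     (\<Sum>j=1..kk. lam j * (if x j \<ge> 1 then TT kk lam (x(j := x j - 1)) t else 0)) - (\<Sum>j=1..kk. lam j) * TT kk lam x t) (at t)"
proof -
  have d: "((\<lambda>t. TT kk lam x t) has_real_derivative
      (\<Sum>j\<in>{1..kk}. lam j * (ppm (lam j * t) (x j) - pp (lam j * t) (x j)) * (\<Prod>l\<in>{1..kk}-{j}. pp (lam l * t) (x l)))) (at t)"
    unfolding TT_def by (rule has_field_derivative_prod) (rule pp_deriv)
  have "(\<Sum>j\<in>{1..kk}. lam j * (ppm (lam j * t) (x j) - pp (lam j * t) (x j)) * (\<Prod>l\<in>{1..kk}-{j}. pp (lam l * t) (x l)))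
     = (\<Sum>j\<in>{1..kk}. lam j * (if x j \<ge> 1 then TT kk lam (x(j := x j - 1)) t else 0) - lam j * TT kk lam x t)"
  proof (rule sum.cong[OF refl])
    fix j assume j: "j \<in> {1..kk}"
    have T: "TT kk lam x t = pp (lam j * t) (x j) * (\<Prod>l\<in>{1..kk}-{j}. pp (lam l * t) (x l))"
      unfolding TT_def using j by (subst prod.remove[of _ j]) auto
    have S: "ppm (lam j * t) (x j) * (\<Prod>l\<in>{1..kk}-{j}. pp (lam l * t) (x l)) = (if x j \<ge> 1 then TT kk lam (x(j := x j - 1)) t else 0)"
      using TT_shift[OF j] by (auto simp: ppm_def)
    show "lam j * (ppm (lam j * t) (x j) - pp (lam j * t) (x j)) * (\<Prod>l\<in>{1..kk}-{j}. pp (lam l * t) (x l))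
       = lam j * (if x j \<ge> 1 then TT kk lam (x(j := x j - 1)) t else 0) - lam j * TT kk lam x t"
      unfolding T S[symmetric] by (simp add: algebra_simps)
  qed
  also have "\<dots> = (\<Sum>j=1..kk. lam j * (if x j \<ge> 1 then TT kk lam (x(j := x j - 1)) t else 0)) - (\<Sum>j=1..kk. lam j) * TT kk lam x t"
    by (simp add: sum_subtractf sum_distrib_right)
  finally show ?thesis using d by simp
qed

lemma gcp_deriv:
  "(gcp_pmf kk lam m has_real_derivative
     (- (\<Sum>j=1..kk. lam j) * gcp_pmf kk lam m t
      + (\<Sum>j=1..kk. lam j * (if j \<le> m then gcp_pmf kk lam (m - j) t else 0)))) (at t)"
proof -
  have eqf: "gcp_pmf kk lam m = (\<lambda>t. \<Sum>x\<in>gcp_omega kk m. TT kk lam x t)"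
    by (rule ext) (rule gcp_TT)
  have d: "(gcp_pmf kk lam m has_real_derivative
     (\<Sum>x\<in>gcp_omega kk m. (\<Sum>j=1..kk. lam j * (if x j \<ge> 1 then TT kk lam (x(j := x j - 1)) t else 0)) - (\<Sum>j=1..kk. lam j) * TT kk lam x t)) (at t)"
    unfolding eqf by (intro DERIV_sum TT_deriv)
  have "(\<Sum>x\<in>gcp_omega kk m. (\<Sum>j=1..kk. lam j * (if x j \<ge> 1 then TT kk lam (x(j := x j - 1)) t else 0)) - (\<Sum>j=1..kk. lam j) * TT kk lam x t)
     = (\<Sum>j=1..kk. lam j * (\<Sum>x\<in>gcp_omega kk m. (if x j \<ge> 1 then TT kk lam (x(j := x j - 1)) t else 0))) - (\<Sum>j=1..kk. lam j) * gcp_pmf kk lam m t"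
    by (simp add: sum_subtractf sum_distrib_left sum_distrib_right gcp_TT sum.swap[of _ "gcp_omega kk m"])
  also have "(\<Sum>j=1..kk. lam j * (\<Sum>x\<in>gcp_omega kk m. (if x j \<ge> 1 then TT kk lam (x(j := x j - 1)) t else 0)))
      = (\<Sum>j=1..kk. lam j * (if j \<le> m then gcp_pmf kk lam (m - j) t else 0))"
  proof (rule sum.cong[OF refl])
    fix j assume j: "j \<in> {1..kk}"
    have "(\<Sum>x\<in>gcp_omega kk m. (if x j \<ge> 1 then TT kk lam (x(j := x j - 1)) t else 0))
        = (\<Sum>x\<in>{x\<in>gcp_omega kk m. x j \<ge> 1}. TT kk lam (x(j := x j - 1)) t)"
      by (rule sum.inter_filter[symmetric, OF gcp_omega_finite])
    also have "\<dots> = (if j \<le> m then gcp_pmf kk lam (m - j) t else 0)"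
      using omega_reindex[OF j, where G = "\<lambda>y. TT kk lam y t" and m = m] by (simp add: gcp_TT)
    finally show "lam j * (\<Sum>x\<in>gcp_omega kk m. (if x j \<ge> 1 then TT kk lam (x(j := x j - 1)) t else 0))
        = lam j * (if j \<le> m then gcp_pmf kk lam (m - j) t else 0)" by simp
  qed
  finally show ?thesis using d by simp
qed

lemma mgcp_deriv:
  "(mgcp_pmf q k lam n has_real_derivative
     (- (\<Sum>i<q. \<Sum>j=1..k i. lam i j) * mgcp_pmf q k lam n t
      + (\<Sum>i<q. \<Sum>j=1..k i. lam i j * (if j \<le> n i then mgcp_pmf q k lam (n(i := n i - j)) t else 0)))) (at t)"
proof -
  let ?g = "\<lambda>i m. gcp_pmf (k i) (lam i) m t"
  let ?R = "\<lambda>i. \<Prod>l\<in>{..<q}-{i}. ?g l (n l)"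
  have eqf: "mgcp_pmf q k lam n = (\<lambda>t. \<Prod>i<q. gcp_pmf (k i) (lam i) (n i) t)"
    by (rule ext) (simp add: mgcp_pmf_def)
  have d: "(mgcp_pmf q k lam n has_real_derivative
     (\<Sum>i<q. (- (\<Sum>j=1..k i. lam i j) * ?g i (n i)
      + (\<Sum>j=1..k i. lam i j * (if j \<le> n i then ?g i (n i - j) else 0))) * ?R i)) (at t)"
    unfolding eqf by (rule has_field_derivative_prod) (rule gcp_deriv)
  have "(\<Sum>i<q. (- (\<Sum>j=1..k i. lam i j) * ?g i (n i)
      + (\<Sum>j=1..k i. lam i j * (if j \<le> n i then ?g i (n i - j) else 0))) * ?R i)
    = (\<Sum>i<q. - (\<Sum>j=1..k i. lam i j) * mgcp_pmf q k lam n t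
      + (\<Sum>j=1..k i. lam i j * (if j \<le> n i then mgcp_pmf q k lam (n(i := n i - j)) t else 0)))"
  proof (rule sum.cong[OF refl])
    fix i assume i: "i \<in> {..<q}"
    have A: "?g i (n i) * ?R i = mgcp_pmf q k lam n t"
      unfolding mgcp_pmf_def using i by (subst prod.remove[of _ i]) auto
    have B: "?g i (n i - j) * ?R i = mgcp_pmf q k lam (n(i := n i - j)) t" for j
    proof -
      have "mgcp_pmf q k lam (n(i := n i - j)) t = ?g i (n i - j) * (\<Prod>l\<in>{..<q}-{i}. ?g l ((n(i := n i - j)) l))"
        unfolding mgcp_pmf_def using i by (subst prod.remove[of _ i]) auto
      also have "(\<Prod>l\<in>{..<q}-{i}. ?g l ((n(i := n i - j)) l)) = ?R i"
        by (rule prod.cong) auto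
      finally show ?thesis by (rule sym)
    qed
    show "(- (\<Sum>j=1..k i. lam i j) * ?g i (n i)
      + (\<Sum>j=1..k i. lam i j * (if j \<le> n i then ?g i (n i - j) else 0))) * ?R i
      = - (\<Sum>j=1..k i. lam i j) * mgcp_pmf q k lam n t
      + (\<Sum>j=1..k i. lam i j * (if j \<le> n i then mgcp_pmf q k lam (n(i := n i - j)) t else 0))"
      (is "?L = _")
    proof -
      have C: "(\<Sum>j=1..k i. lam i j * (if j \<le> n i then ?g i (n i - j) else 0)) * ?R i
         = (\<Sum>j=1..k i. lam i j * (if j \<le> n i then mgcp_pmf q k lam (n(i := n i - j)) t else 0))"
        unfolding sum_distrib_right by (rule sum.cong) (auto simp: B[symmetric])
      have "?L = - (\<Sum>j=1..k i. lam i j) * (?g i (n i) * ?R i) + (\<Sum>j=1..k i. lam i j * (if j \<le> n i then ?g i (n i - j) else 0)) * ?R i"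
        by (simp only: distrib_right mult.assoc)
      then show ?thesis by (simp only: A C)
    qed
  qed
  also have "\<dots> = - (\<Sum>i<q. \<Sum>j=1..k i. lam i j) * mgcp_pmf q k lam n t
      + (\<Sum>i<q. \<Sum>j=1..k i. lam i j * (if j \<le> n i then mgcp_pmf q k lam (n(i := n i - j)) t else 0))"
    by (simp add: sum.distrib sum_distrib_right sum_negf sum_subtractf)
  finally show ?thesis using d by simp
qed

lemma pow_fact_le_exp: assumes "(y::real) \<ge> 0" shows "y ^ r / fact r \<le> exp y"
proof -
  have s: "summable (\<lambda>n. y ^ n /\<^sub>R fact n)" by (rule summable_exp_generic)
  have "y ^ r / fact r = (\<Sum>n\<in>{r}. y ^ n /\<^sub>R fact n)" by (simp add: divide_inverse_commute)
  also have "\<dots> \<le> (\<Sum>n. y ^ n /\<^sub>R fact n)"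
    by (rule sum_le_suminf[OF s]) (use assms in auto)
  also have "\<dots> = exp y" by (simp add: exp_def)
  finally show ?thesis .
qed

lemma pp_bounds: assumes "y \<ge> 0" shows "0 \<le> pp y r" "pp y r \<le> 1"
proof -
  show "0 \<le> pp y r" using assms unfolding pp_def by simp
  have "y ^ r / fact r * exp (- y) \<le> exp y * exp (- y)"
    by (rule mult_right_mono[OF pow_fact_le_exp[OF assms]]) simp
  then show "pp y r \<le> 1" unfolding pp_def by (simp add: exp_minus_inverse)
qed

lemma TT_bounds: assumes "\<And>j. j \<in> {1..kk} \<Longrightarrow> lam j \<ge> 0" "t \<ge> 0"
  shows "0 \<le> TT kk lam x t" "TT kk lam x t \<le> 1"
  unfolding TT_def using assms pp_bounds
  by (auto intro!: prod_nonneg prod_le_1)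

lemma gcp_bounds: assumes "\<And>j. j \<in> {1..kk} \<Longrightarrow> lam j \<ge> 0" "t \<ge> 0"
  shows "0 \<le> gcp_pmf kk lam m t" "gcp_pmf kk lam m t \<le> real (card (gcp_omega kk m))"
proof -
  show "0 \<le> gcp_pmf kk lam m t" unfolding gcp_TT using TT_bounds[OF assms] by (auto intro!: sum_nonneg)
  have "gcp_pmf kk lam m t \<le> (\<Sum>x\<in>gcp_omega kk m. 1)" unfolding gcp_TT
    using TT_bounds[OF assms] by (intro sum_mono) auto
  then show "gcp_pmf kk lam m t \<le> real (card (gcp_omega kk m))" by simp
qed

lemma mgcp_bounds: assumes "\<And>i j. i < q \<Longrightarrow> j \<in> {1..k i} \<Longrightarrow> lam i j \<ge> 0" "t \<ge> 0"
  shows "0 \<le> mgcp_pmf q k lam n t" "mgcp_pmf q k lam n t \<le> (\<Prod>i<q. real (card (gcp_omega (k i) (n i))))"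
  unfolding mgcp_pmf_def using gcp_bounds assms
  by (auto intro!: prod_nonneg prod_mono)

lemma quotient_bound:
  fixes f f' :: "real \<Rightarrow> real"
  assumes der: "\<And>t. a < t \<Longrightarrow> t < b \<Longrightarrow> (f has_real_derivative f' t) (at t)"
    and bd: "\<And>t. a < t \<Longrightarrow> t < b \<Longrightarrow> \<bar>f' t\<bar> \<le> B"
    and s: "a < s" "s < b" and u: "a < u" "u < b"
  shows "\<bar>f s - f u\<bar> \<le> B * \<bar>s - u\<bar>"
proof -
  have main: "\<bar>f y - f z\<bar> \<le> B * \<bar>y - z\<bar>" if "a < z" "z < y" "y < b" for y z
  proof -
    have "\<And>x. z \<le> x \<Longrightarrow> x \<le> y \<Longrightarrow> (f has_real_derivative f' x) (at x)"
      using der that by auto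
    from MVT2[OF \<open>z < y\<close> this] obtain w where w: "z < w" "w < y" "f y - f z = (y - z) * f' w"
      by blast
    have "\<bar>f y - f z\<bar> = \<bar>y - z\<bar> * \<bar>f' w\<bar>" using w by (simp add: abs_mult)
    also have "\<dots> \<le> \<bar>y - z\<bar> * B" using bd[of w] w that by (intro mult_left_mono) auto
    finally show ?thesis by (simp add: mult.commute)
  qed
  consider "s < u" | "s = u" | "u < s" by linarith
  then show ?thesis
  proof cases
    case 1 then show ?thesis using main[of s u] s u by (simp add: abs_minus_commute)
  next
    case 2 then show ?thesis by simp
  next
    case 3 then show ?thesis using main[of u s] s u by simp
  qed
qed

lemma DERIV_set_integral:
  fixes h h' :: "real \<Rightarrow> real \<Rightarrow> real" and S :: "real set"
  assumes t0: "a < t0" "t0 < b"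
    and der: "\<And>x t. x \<in> S \<Longrightarrow> a < t \<Longrightarrow> t < b \<Longrightarrow> ((\<lambda>t. h x t) has_real_derivative h' x t) (at t)"
    and int: "\<And>t. a < t \<Longrightarrow> t < b \<Longrightarrow> set_integrable lborel S (\<lambda>x. h x t)"
    and meas: "(\<lambda>x. indicator S x * h' x t0) \<in> borel_measurable lborel"
    and D: "set_integrable lborel S D"
    and bound: "\<And>x t. x \<in> S \<Longrightarrow> a < t \<Longrightarrow> t < b \<Longrightarrow> \<bar>h' x t\<bar> \<le> D x"
  shows "((\<lambda>t. LINT x:S|lborel. h x t) has_real_derivative (LINT x:S|lborel. h' x t0)) (at t0)"
proof -
  let ?F = "\<lambda>t. LINT x:S|lborel. h x t"
  have "((\<lambda>y. (?F y - ?F t0) / (y - t0)) \<longlongrightarrow> (LINT x:S|lborel. h' x t0)) (at t0 within {a<..<b})"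
    unfolding tendsto_at_iff_sequentially
  proof (intro allI impI)
    fix X :: "nat \<Rightarrow> real"
    assume X: "\<forall>i. X i \<in> {a<..<b} - {t0}" and lim: "X \<longlonglongrightarrow> t0"
    let ?s = "\<lambda>i x. indicator S x * ((h x (X i) - h x t0) / (X i - t0))"
    have eq: "(?F (X i) - ?F t0) / (X i - t0) = integral\<^sup>L lborel (?s i)" for i
    proof -
      have i1: "integrable lborel (\<lambda>x. indicator S x * h x (X i))"
        using int[of "X i"] X unfolding set_integrable_def by auto
      have i2: "integrable lborel (\<lambda>x. indicator S x * h x t0)"
        using int[of t0] t0 unfolding set_integrable_def by auto
      have "integral\<^sup>L lborel (?s i) = integral\<^sup>L lborel (\<lambda>x. (indicator S x * h x (X i) - indicator S x * h x t0) / (X i - t0))"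
        by (rule Bochner_Integration.integral_cong) (auto simp: algebra_simps diff_divide_distrib)
      also have "\<dots> = (integral\<^sup>L lborel (\<lambda>x. indicator S x * h x (X i)) - integral\<^sup>L lborel (\<lambda>x. indicator S x * h x t0)) / (X i - t0)"
        using i1 i2 by simp
      finally show ?thesis unfolding set_lebesgue_integral_def real_scaleR_def by (rule sym)
    qed
    have LIM: "(\<lambda>i. integral\<^sup>L lborel (?s i)) \<longlonglongrightarrow> integral\<^sup>L lborel (\<lambda>x. indicator S x * h' x t0)"
    proof (rule integral_dominated_convergence[where w = "\<lambda>x. indicator S x * D x"])
      show "(\<lambda>x. indicator S x * h' x t0) \<in> borel_measurable lborel" by (rule meas)
      show "?s i \<in> borel_measurable lborel" for i
      proof -
        have i1: "integrable lborel (\<lambda>x. indicator S x * h x (X i))"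
          using int[of "X i"] X unfolding set_integrable_def by auto
        have i2: "integrable lborel (\<lambda>x. indicator S x * h x t0)"
          using int[of t0] t0 unfolding set_integrable_def by auto
        have "(\<lambda>x. (indicator S x * h x (X i) - indicator S x * h x t0) / (X i - t0)) \<in> borel_measurable lborel"
          using i1 i2 by measurable
        moreover have "(\<lambda>x. (indicator S x * h x (X i) - indicator S x * h x t0) / (X i - t0)) = ?s i"
          by (auto simp: algebra_simps diff_divide_distrib)
        ultimately show ?thesis by simp
      qed
      show "integrable lborel (\<lambda>x. indicator S x * D x)"
        using D unfolding set_integrable_def by simp
      show "AE x in lborel. (\<lambda>i. ?s i x) \<longlonglongrightarrow> indicator S x * h' x t0"
      proof (rule AE_I2)
        fix x show "(\<lambda>i. ?s i x) \<longlonglongrightarrow> indicator S x * h' x t0"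
        proof (cases "x \<in> S")
          case True
          have "((\<lambda>t. h x t) has_real_derivative h' x t0) (at t0 within UNIV)"
            using der[OF True t0] by simp
          then have "((\<lambda>y. (h x y - h x t0) / (y - t0)) \<longlongrightarrow> h' x t0) (at t0 within UNIV)"
            by (simp add: has_field_derivative_iff)
          then have "((\<lambda>y. (h x y - h x t0) / (y - t0)) \<circ> X) \<longlonglongrightarrow> h' x t0"
            unfolding tendsto_at_iff_sequentially using X lim by auto
          then show ?thesis using True by (simp add: o_def)
        qed simp
      qed
      show "AE x in lborel. norm (?s i x) \<le> indicator S x * D x" for i
      proof (rule AE_I2)
        fix x show "norm (?s i x) \<le> indicator S x * D x"
        proof (cases "x \<in> S")
          case True
          have Xi: "a < X i" "X i < b" "X i \<noteq> t0" using X by auto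
          have "\<bar>h x (X i) - h x t0\<bar> \<le> D x * \<bar>X i - t0\<bar>"
            by (rule quotient_bound[where f = "\<lambda>t. h x t" and f' = "h' x" and a = a and b = b])
               (use der[OF True] bound[OF True] Xi t0 in auto)
          then have "\<bar>(h x (X i) - h x t0) / (X i - t0)\<bar> \<le> D x"
            using Xi by (simp add: abs_divide divide_le_eq)
          then show ?thesis using True by simp
        qed simp
      qed
    qed
    have E2: "(LINT x:S|lborel. h' x t0) = integral\<^sup>L lborel (\<lambda>x. indicator S x * h' x t0)"
      by (simp add: set_lebesgue_integral_def)
    show "((\<lambda>y. (?F y - ?F t0) / (y - t0)) \<circ> X) \<longlonglongrightarrow> (LINT x:S|lborel. h' x t0)"
    proof -
      have E1: "(\<lambda>i. (?F (X i) - ?F t0) / (X i - t0)) = (\<lambda>i. integral\<^sup>L lborel (?s i))"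
        by (rule ext) (rule eq)
      show ?thesis unfolding comp_def E1 E2 by (rule LIM)
    qed
  qed
  then have DD: "(?F has_real_derivative (LINT x:S|lborel. h' x t0)) (at t0 within {a<..<b})"
    unfolding has_field_derivative_iff .
  have A: "at t0 within {a<..<b} = at t0" using t0 by (intro at_within_open) auto
  show ?thesis using DD unfolding A .
qed

lemma phi_dt: assumes "x > 0" shows "((\<lambda>t. \<delta> * \<gamma> * t - (\<delta>\<^sup>2 * t\<^sup>2 / x + \<gamma>\<^sup>2 * x) / 2) has_real_derivative (\<delta>*\<gamma> - \<delta>\<^sup>2*t/x)) (at t)"
  using assms by (auto intro!: derivative_eq_intros simp: field_simps power2_eq_square)

lemma phi_dx: assumes "x > 0" shows "((\<lambda>x. \<delta> * \<gamma> * t - (\<delta>\<^sup>2 * t\<^sup>2 / x + \<gamma>\<^sup>2 * x) / 2) has_real_derivative (\<delta>\<^sup>2*t\<^sup>2/(2*x\<^sup>2) - \<gamma>\<^sup>2/2)) (at x)"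
  using assms by (auto intro!: derivative_eq_intros simp: field_simps power2_eq_square)

lemma sq_dx: assumes "x > 0" shows "((\<lambda>x. 1 / sqrt (2 * pi * x ^ 3)) has_real_derivative (- 3 / (2 * x)) * (1 / sqrt (2 * pi * x ^ 3))) (at x)"
proof -
  have p: "0 < pi * x ^ 3" "0 < pi * (x * (x * x))" using assms pi_gt_zero by simp_all
  show ?thesis using assms p by (auto intro!: derivative_eq_intros simp: field_simps power2_eq_square power3_eq_cube mult_less_0_iff)
qed

definition gt :: "real \<Rightarrow> real \<Rightarrow> real \<Rightarrow> real \<Rightarrow> real" where
  "gt \<delta> \<gamma> x t = ig_density \<delta> \<gamma> x t * (1/t + \<delta>*\<gamma> - \<delta>\<^sup>2*t/x)"
definition gtt :: "real \<Rightarrow> real \<Rightarrow> real \<Rightarrow> real \<Rightarrow> real" where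
  "gtt \<delta> \<gamma> x t = ig_density \<delta> \<gamma> x t * ((1/t + \<delta>*\<gamma> - \<delta>\<^sup>2*t/x)\<^sup>2 - 1/t\<^sup>2 - \<delta>\<^sup>2/x)"
definition gx :: "real \<Rightarrow> real \<Rightarrow> real \<Rightarrow> real \<Rightarrow> real" where
  "gx \<delta> \<gamma> x t = ig_density \<delta> \<gamma> x t * (-3/(2*x) + \<delta>\<^sup>2*t\<^sup>2/(2*x\<^sup>2) - \<gamma>\<^sup>2/2)"

lemma ig_alt: "ig_density \<delta> \<gamma> x t = \<delta> * t * (1 / sqrt (2 * pi * x ^ 3)) * exp (\<delta> * \<gamma> * t - (\<delta>\<^sup>2 * t\<^sup>2 / x + \<gamma>\<^sup>2 * x) / 2)"
  unfolding ig_density_def by simp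

lemma ig_dt: assumes "x > 0" "t > 0"
  shows "((\<lambda>t. ig_density \<delta> \<gamma> x t) has_real_derivative gt \<delta> \<gamma> x t) (at t)"
proof -
  define c where "c = 1 / sqrt (2 * pi * x ^ 3)"
  define E where "E = (\<lambda>t. exp (\<delta> * \<gamma> * t - (\<delta>\<^sup>2 * t\<^sup>2 / x + \<gamma>\<^sup>2 * x) / 2))"
  have eq: "(\<lambda>t. ig_density \<delta> \<gamma> x t) = (\<lambda>t. \<delta> * t * c * E t)"
    unfolding ig_alt c_def E_def by simp
  have dE: "(E has_real_derivative E t * (\<delta>*\<gamma> - \<delta>\<^sup>2*t/x)) (at t)"
    unfolding E_def by (rule DERIV_fun_exp[OF phi_dt[OF assms(1)]])
  have "((\<lambda>t. \<delta> * t * c * E t) has_real_derivative \<delta> * c * E t + \<delta> * t * c * (E t * (\<delta>*\<gamma> - \<delta>\<^sup>2*t/x))) (at t)"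
    by (rule DERIV_cong, rule DERIV_mult[OF _ dE], auto intro!: derivative_eq_intros simp: algebra_simps)
  moreover have "\<delta> * c * E t + \<delta> * t * c * (E t * (\<delta>*\<gamma> - \<delta>\<^sup>2*t/x)) = gt \<delta> \<gamma> x t"
  proof -
    have ig: "ig_density \<delta> \<gamma> x t = \<delta> * t * c * E t" using fun_cong[OF eq, of t] by simp
    show ?thesis unfolding gt_def ig using assms by (simp add: field_simps)
  qed
  ultimately show ?thesis unfolding eq by simp
qed

lemma ig_dx: assumes "x > 0"
  shows "((\<lambda>x. ig_density \<delta> \<gamma> x t) has_real_derivative gx \<delta> \<gamma> x t) (at x)"
proof -
  define E where "E = (\<lambda>x. exp (\<delta> * \<gamma> * t - (\<delta>\<^sup>2 * t\<^sup>2 / x + \<gamma>\<^sup>2 * x) / 2))"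
  define C where "C = (\<lambda>x::real. 1 / sqrt (2 * pi * x ^ 3))"
  have eq: "(\<lambda>x. ig_density \<delta> \<gamma> x t) = (\<lambda>x. \<delta> * t * (C x * E x))"
    unfolding ig_alt C_def E_def by (simp add: mult.assoc)
  have dE: "(E has_real_derivative E x * (\<delta>\<^sup>2*t\<^sup>2/(2*x\<^sup>2) - \<gamma>\<^sup>2/2)) (at x)"
    unfolding E_def by (rule DERIV_fun_exp[OF phi_dx[OF assms(1)]])
  have dC: "(C has_real_derivative (- 3 / (2 * x)) * C x) (at x)"
    unfolding C_def by (rule sq_dx[OF assms])
  have "((\<lambda>x. \<delta> * t * (C x * E x)) has_real_derivative \<delta> * t * ((- 3 / (2 * x)) * C x * E x + E x * (\<delta>\<^sup>2*t\<^sup>2/(2*x\<^sup>2) - \<gamma>\<^sup>2/2) * C x)) (at x)"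
    by (intro DERIV_cmult DERIV_mult dC dE)
  moreover have "\<delta> * t * ((- 3 / (2 * x)) * C x * E x + E x * (\<delta>\<^sup>2*t\<^sup>2/(2*x\<^sup>2) - \<gamma>\<^sup>2/2) * C x) = gx \<delta> \<gamma> x t"
  proof -
    have ig: "ig_density \<delta> \<gamma> x t = \<delta> * t * (C x * E x)" using fun_cong[OF eq, of x] by simp
    show ?thesis unfolding gx_def ig using assms by (simp add: field_simps)
  qed
  ultimately show ?thesis unfolding eq by simp
qed

lemma gt_dt: assumes "x > 0" "t > 0"
  shows "((\<lambda>t. gt \<delta> \<gamma> x t) has_real_derivative gtt \<delta> \<gamma> x t) (at t)"
proof -
  have dL: "((\<lambda>t. 1/t + \<delta>*\<gamma> - \<delta>\<^sup>2*t/x) has_real_derivative (- 1/t\<^sup>2 - \<delta>\<^sup>2/x)) (at t)"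
    using assms by (auto intro!: derivative_eq_intros simp: field_simps power2_eq_square)
  have gtfun: "(\<lambda>t. gt \<delta> \<gamma> x t) = (\<lambda>t. ig_density \<delta> \<gamma> x t * (1/t + \<delta>*\<gamma> - \<delta>\<^sup>2*t/x))"
    by (rule ext) (simp add: gt_def)
  have "((\<lambda>t. ig_density \<delta> \<gamma> x t * (1/t + \<delta>*\<gamma> - \<delta>\<^sup>2*t/x)) has_real_derivative
     gt \<delta> \<gamma> x t * (1/t + \<delta>*\<gamma> - \<delta>\<^sup>2*t/x) + (- 1/t\<^sup>2 - \<delta>\<^sup>2/x) * ig_density \<delta> \<gamma> x t) (at t)"
    by (rule DERIV_mult[OF ig_dt[OF assms] dL])
  then have "((\<lambda>t. gt \<delta> \<gamma> x t) has_real_derivative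
     gt \<delta> \<gamma> x t * (1/t + \<delta>*\<gamma> - \<delta>\<^sup>2*t/x) + (- 1/t\<^sup>2 - \<delta>\<^sup>2/x) * ig_density \<delta> \<gamma> x t) (at t)"
    unfolding gtfun .
  moreover have "gt \<delta> \<gamma> x t * (1/t + \<delta>*\<gamma> - \<delta>\<^sup>2*t/x) + (- 1/t\<^sup>2 - \<delta>\<^sup>2/x) * ig_density \<delta> \<gamma> x t = gtt \<delta> \<gamma> x t"
    unfolding gt_def gtt_def using assms by (simp add: field_simps power2_eq_square)
  ultimately show ?thesis by simp
qed

lemma pde: assumes "x > 0" "t > 0"
  shows "gtt \<delta> \<gamma> x t - 2 * \<delta> * \<gamma> * gt \<delta> \<gamma> x t = 2 * \<delta>\<^sup>2 * gx \<delta> \<gamma> x t"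
  unfolding gtt_def gt_def gx_def using assms by (simp add: field_simps power2_eq_square)

lemma poly_exp_bound:
  fixes c u :: real assumes c: "c > 0" and u: "u \<ge> 0"
  shows "(1 + u) ^ 2 * (1 + u) ^ 2 * exp (- c * u) \<le> 1 / (min 1 (c/4)) ^ 4"
proof -
  define m where "m = min 1 (c/4)"
  have m: "m > 0" "m \<le> 1" "m \<le> c/4" using c by (auto simp: m_def)
  have "m * u \<le> (c/4) * u" using m u by (intro mult_right_mono) auto
  then have "m * (1 + u) \<le> 1 + c * u / 4"
    using m by (simp add: algebra_simps)
  also have "\<dots> \<le> exp (c * u / 4)" using exp_ge_add_one_self[of "c*u/4"] by simp
  finally have "(m * (1 + u)) ^ 4 \<le> exp (c * u / 4) ^ 4"
    using m u by (intro power_mono) auto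
  also have "\<dots> = exp (c * u)" by (simp add: exp_of_nat_mult[symmetric])
  finally have "m ^ 4 * (1 + u) ^ 4 \<le> exp (c * u)" by (simp add: power_mult_distrib)
  then have "(1 + u) ^ 4 \<le> exp (c * u) / m ^ 4" using m by (simp add: field_simps)
  then have "(1 + u) ^ 4 * exp (- c * u) \<le> exp (c * u) / m ^ 4 * exp (- c * u)"
    by (intro mult_right_mono) auto
  also have "\<dots> = 1 / m ^ 4" by (simp add: exp_minus_inverse field_simps exp_minus)
  finally have "(1 + u) ^ 4 * exp (- c * u) \<le> 1 / (min 1 (c/4)) ^ 4" by (simp add: m_def)
  moreover have "(1 + u) ^ 2 * (1 + u) ^ 2 = (1 + u) ^ 4" by (simp flip: power_add)
  ultimately show ?thesis by simp
qed

lemma inv_sqrt_bound: assumes "x > 0" shows "1 / sqrt (2 * pi * x ^ 3) \<le> (1 + 1/x) ^ 2"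
proof -
  have "1 / sqrt (2 * pi * x ^ 3) \<le> 1 / sqrt (x ^ 3)"
    using assms pi_gt3 by (intro divide_left_mono real_sqrt_le_mono mult_right_mono mult_pos_pos) auto
  also have "\<dots> \<le> (1 + 1/x) ^ 2"
  proof (cases "x \<ge> 1")
    case True
    then have "1 \<le> sqrt (x ^ 3)" by simp
    then have "1 / sqrt (x ^ 3) \<le> 1 / 1" using assms by (intro divide_left_mono) auto
    then have "1 / sqrt (x ^ 3) \<le> 1" by simp
    also have "1 \<le> (1 + 1/x) ^ 2" using assms by simp
    finally show ?thesis .
  next
    case False
    have "x ^ 4 \<le> x ^ 3" using False assms by (intro power_decreasing) auto
    then have "sqrt (x ^ 4) \<le> sqrt (x ^ 3)" by simp
    moreover have "sqrt (x ^ 4) = x ^ 2"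
      by (metis (no_types) numeral_Bit0 numeral_One power2_eq_square power_add real_sqrt_abs abs_of_nonneg assms less_imp_le power2_abs zero_le_power2)
    ultimately have "x ^ 2 \<le> sqrt (x ^ 3)" by simp
    then have "1 / sqrt (x ^ 3) \<le> 1 / x ^ 2" using assms by (intro divide_left_mono) auto
    also have "\<dots> = (1/x) ^ 2" by (simp add: power_one_over)
    also have "\<dots> \<le> (1 + 1/x) ^ 2" using assms by (intro power_mono) auto
    finally show ?thesis .
  qed
  finally show ?thesis .
qed

lemma ig_nonneg: assumes "\<delta> \<ge> 0" "t \<ge> 0" "x > 0" shows "0 \<le> ig_density \<delta> \<gamma> x t"
  unfolding ig_density_def using assms by simp

lemma ig_bound0:
  assumes d: "\<delta> > 0" and g: "\<gamma> \<ge> 0" and a: "0 < a" "a \<le> t" "t \<le> b" and x: "x > 0"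
  shows "ig_density \<delta> \<gamma> x t \<le> \<delta>*b*exp(\<delta>*\<gamma>*b) * (1+1/x)^2 * exp(-(\<delta>\<^sup>2*a\<^sup>2/2)*(1/x)) * exp(-(\<gamma>\<^sup>2/2)*x)"
proof -
  have phi: "\<delta> * \<gamma> * t - (\<delta>\<^sup>2 * t\<^sup>2 / x + \<gamma>\<^sup>2 * x) / 2 \<le> \<delta>*\<gamma>*b + (-(\<delta>\<^sup>2*a\<^sup>2/2)*(1/x)) + (-(\<gamma>\<^sup>2/2)*x)"
  proof -
    have "\<delta>*\<gamma>*t \<le> \<delta>*\<gamma>*b" using d g a by (intro mult_left_mono) auto
    moreover have "a\<^sup>2 \<le> t\<^sup>2" using a by (intro power_mono) auto
    then have "\<delta>\<^sup>2 * a\<^sup>2 / x \<le> \<delta>\<^sup>2 * t\<^sup>2 / x" using x by (intro divide_right_mono mult_left_mono) auto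
    ultimately show ?thesis by (simp add: field_simps)
  qed
  have E: "exp (\<delta> * \<gamma> * t - (\<delta>\<^sup>2 * t\<^sup>2 / x + \<gamma>\<^sup>2 * x) / 2) \<le> exp(\<delta>*\<gamma>*b) * exp(-(\<delta>\<^sup>2*a\<^sup>2/2)*(1/x)) * exp(-(\<gamma>\<^sup>2/2)*x)"
  proof -
    have "exp (\<delta> * \<gamma> * t - (\<delta>\<^sup>2 * t\<^sup>2 / x + \<gamma>\<^sup>2 * x) / 2) \<le> exp (\<delta>*\<gamma>*b + (-(\<delta>\<^sup>2*a\<^sup>2/2)*(1/x)) + (-(\<gamma>\<^sup>2/2)*x))"
      using phi by (simp only: exp_le_cancel_iff)
    also have "\<dots> = exp(\<delta>*\<gamma>*b) * exp(-(\<delta>\<^sup>2*a\<^sup>2/2)*(1/x)) * exp(-(\<gamma>\<^sup>2/2)*x)"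
      by (simp only: exp_add)
    finally show ?thesis .
  qed
  have T: "\<delta> * t \<le> \<delta> * b" using d a by simp
  have "ig_density \<delta> \<gamma> x t = (\<delta> * t) * (1 / sqrt (2 * pi * x ^ 3)) * exp (\<delta> * \<gamma> * t - (\<delta>\<^sup>2 * t\<^sup>2 / x + \<gamma>\<^sup>2 * x) / 2)"
    by (simp add: ig_alt)
  also have "\<dots> \<le> (\<delta> * b) * (1+1/x)^2 * (exp(\<delta>*\<gamma>*b) * exp(-(\<delta>\<^sup>2*a\<^sup>2/2)*(1/x)) * exp(-(\<gamma>\<^sup>2/2)*x))"
    using d a x by (intro mult_mono T E inv_sqrt_bound) auto
  finally show ?thesis by (simp add: algebra_simps)
qed

lemma igF_bound:
  assumes d: "\<delta> > 0" and g: "\<gamma> \<ge> 0" and a: "0 < a" "a \<le> t" "t \<le> b" and x: "x > 0"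
    and F: "\<bar>F\<bar> \<le> M * (1+1/x)^2"
  shows "\<bar>ig_density \<delta> \<gamma> x t * F\<bar> \<le> \<delta>*b*exp(\<delta>*\<gamma>*b) * M * (1 / (min 1 ((\<delta>\<^sup>2*a\<^sup>2/2)/4)) ^ 4) * exp(-(\<gamma>\<^sup>2/2)*x)"
proof -
  define c where "c = \<delta>\<^sup>2*a\<^sup>2/2"
  have c: "c > 0" using d a by (simp add: c_def)
  have pos: "(1+1/x)^2 > 0" using x by (intro zero_less_power) (simp add: add_pos_pos)
  have "0 \<le> M * (1+1/x)^2" using F abs_ge_zero[of F] by linarith
  then have M: "M \<ge> 0" using pos by (simp add: zero_le_mult_iff)
  have g0: "0 \<le> ig_density \<delta> \<gamma> x t" using d a x by (intro ig_nonneg) auto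
  have B0: "ig_density \<delta> \<gamma> x t \<le> \<delta>*b*exp(\<delta>*\<gamma>*b) * (1+1/x)^2 * exp(-c*(1/x)) * exp(-(\<gamma>\<^sup>2/2)*x)"
    using ig_bound0[OF d g a x] unfolding c_def .
  have "\<bar>ig_density \<delta> \<gamma> x t * F\<bar> = ig_density \<delta> \<gamma> x t * \<bar>F\<bar>" using g0 by (simp add: abs_mult)
  also have "\<dots> \<le> (\<delta>*b*exp(\<delta>*\<gamma>*b) * (1+1/x)^2 * exp(-c*(1/x)) * exp(-(\<gamma>\<^sup>2/2)*x)) * (M * (1+1/x)^2)"
    by (rule mult_mono[OF B0 F]) (use g0 B0 in auto)
  also have "\<dots> = (\<delta>*b*exp(\<delta>*\<gamma>*b) * M) * ((1+1/x)^2 * (1+1/x)^2 * exp(-c*(1/x))) * exp(-(\<gamma>\<^sup>2/2)*x)"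
    by (simp only: mult_ac)
  also have "\<dots> \<le> (\<delta>*b*exp(\<delta>*\<gamma>*b) * M) * (1 / (min 1 (c/4)) ^ 4) * exp(-(\<gamma>\<^sup>2/2)*x)"
  proof -
    have P: "(1+1/x)^2 * (1+1/x)^2 * exp(-c*(1/x)) \<le> 1 / (min 1 (c/4)) ^ 4"
      using poly_exp_bound[OF c, of "1/x"] x by simp
    have K: "0 \<le> \<delta>*b*exp(\<delta>*\<gamma>*b) * M" using d a M by simp
    show ?thesis by (rule mult_right_mono[OF mult_left_mono[OF P K]]) simp
  qed
  finally show ?thesis unfolding c_def .
qed

lemma L1_bound:
  fixes \<delta> \<gamma> a t b x :: real
  assumes d: "\<delta> > 0" and g: "\<gamma> \<ge> 0" and a: "0 < a" "a \<le> t" "t \<le> b" and x: "x > 0"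
  shows "\<bar>1/t + \<delta>*\<gamma> - \<delta>\<^sup>2*t/x\<bar> \<le> (1/a + \<delta>*\<gamma> + \<delta>\<^sup>2*b) * (1 + 1/x)"
proof -
  have t: "t > 0" using a by linarith
  have i1: "1/t \<le> 1/a" using a by (intro divide_left_mono) auto
  have i2: "0 \<le> \<delta>\<^sup>2*t/x" using t x by simp
  have "\<delta>\<^sup>2*t/x \<le> \<delta>\<^sup>2*b/x" using a x by (intro divide_right_mono mult_left_mono) auto
  then have i3: "\<delta>\<^sup>2*t/x \<le> \<delta>\<^sup>2*b*(1/x)" by simp
  have i4: "0 \<le> \<delta>*\<gamma>" using d g by simp
  have i5: "0 < 1/t" using t by simp
  have "\<bar>1/t + \<delta>*\<gamma> - \<delta>\<^sup>2*t/x\<bar> \<le> 1/a + \<delta>*\<gamma> + \<delta>\<^sup>2*b*(1/x)"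
    using i1 i2 i3 i4 i5 by linarith
  also have "\<dots> \<le> (1/a + \<delta>*\<gamma> + \<delta>\<^sup>2*b) * (1 + 1/x)"
  proof -
    have "0 \<le> (1/a + \<delta>*\<gamma>) * (1/x)" using a i4 x by simp
    moreover have "0 \<le> \<delta>\<^sup>2*b" using a by simp
    ultimately show ?thesis by (simp add: algebra_simps)
  qed
  finally show ?thesis .
qed

lemma aux_sq: "(u::real) \<ge> 0 \<Longrightarrow> 1 + u \<le> (1+u)^2"
  using mult_nonneg_nonneg[of u u] by (simp add: power2_eq_square algebra_simps)

lemma one_le_sq: "x > 0 \<Longrightarrow> (1::real) \<le> (1 + 1/x)^2"
  by simp

lemma lin_le_sq: "(x::real) > 0 \<Longrightarrow> M \<ge> 0 \<Longrightarrow> M * (1 + 1/x) \<le> M * (1 + 1/x)^2"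
proof -
  assume x: "x > 0" and M: "M \<ge> 0"
  have "0 \<le> 1/x" using x by simp
  then have "1 + 1/x \<le> (1 + 1/x)^2" by (rule aux_sq)
  then show ?thesis using M by (intro mult_left_mono) auto
qed

lemma L2_bound:
  fixes \<delta> \<gamma> a t b x :: real
  assumes d: "\<delta> > 0" and g: "\<gamma> \<ge> 0" and a: "0 < a" "a \<le> t" "t \<le> b" and x: "x > 0"
  shows "\<bar>(1/t + \<delta>*\<gamma> - \<delta>\<^sup>2*t/x)\<^sup>2 - 1/t\<^sup>2 - \<delta>\<^sup>2/x\<bar> \<le> ((1/a + \<delta>*\<gamma> + \<delta>\<^sup>2*b)\<^sup>2 + 1/a\<^sup>2 + \<delta>\<^sup>2) * (1 + 1/x)^2"
proof -
  define M1 where "M1 = 1/a + \<delta>*\<gamma> + \<delta>\<^sup>2*b"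
  define u where "u = 1/x"
  have u: "u \<ge> 0" unfolding u_def using x by simp
  have t: "t > 0" using a by linarith
  have A: "\<bar>1/t + \<delta>*\<gamma> - \<delta>\<^sup>2*t/x\<bar> \<le> M1 * (1 + u)" using L1_bound[OF assms] by (simp add: M1_def u_def)
  have A2: "(1/t + \<delta>*\<gamma> - \<delta>\<^sup>2*t/x)\<^sup>2 \<le> M1\<^sup>2 * (1 + u)^2"
  proof -
    have "(1/t + \<delta>*\<gamma> - \<delta>\<^sup>2*t/x)\<^sup>2 = \<bar>1/t + \<delta>*\<gamma> - \<delta>\<^sup>2*t/x\<bar>\<^sup>2" by simp
    also have "\<dots> \<le> (M1 * (1 + u))\<^sup>2" by (rule power_mono[OF A]) simp
    finally show ?thesis by (simp add: power_mult_distrib)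
  qed
  have B: "1/t\<^sup>2 \<le> 1/a\<^sup>2 * (1 + u)^2"
  proof -
    have "1/t\<^sup>2 \<le> 1/a\<^sup>2" using a t by (intro divide_left_mono power_mono mult_pos_pos) auto
    also have "\<dots> \<le> 1/a\<^sup>2 * (1 + u)^2"
    proof -
      have "1 \<le> (1+u)^2" using aux_sq[OF u] u by linarith
      from mult_left_mono[OF this, of "1/a\<^sup>2"] show ?thesis by simp
    qed
    finally show ?thesis .
  qed
  have C: "\<delta>\<^sup>2/x \<le> \<delta>\<^sup>2 * (1 + u)^2"
  proof -
    have "\<delta>\<^sup>2/x = \<delta>\<^sup>2 * u" by (simp add: u_def)
    also have "\<dots> \<le> \<delta>\<^sup>2 * (1 + u)^2" using u by (intro mult_left_mono) (auto simp: power2_eq_square algebra_simps)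
    finally show ?thesis .
  qed
  have P: "0 \<le> 1/t\<^sup>2" "0 \<le> \<delta>\<^sup>2/x" using x by auto
  have "\<bar>(1/t + \<delta>*\<gamma> - \<delta>\<^sup>2*t/x)\<^sup>2 - 1/t\<^sup>2 - \<delta>\<^sup>2/x\<bar> \<le> M1\<^sup>2 * (1 + u)^2 + 1/a\<^sup>2 * (1 + u)^2 + \<delta>\<^sup>2 * (1 + u)^2"
    using A2 B C P zero_le_power2[of "1/t + \<delta>*\<gamma> - \<delta>\<^sup>2*t/x"] by linarith
  also have "\<dots> = (M1\<^sup>2 + 1/a\<^sup>2 + \<delta>\<^sup>2) * (1 + u)^2" by (simp add: algebra_simps)
  finally show ?thesis by (simp add: M1_def u_def)
qed

lemma L3_bound:
  fixes \<delta> \<gamma> a t b x :: real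
  assumes d: "\<delta> > 0" and g: "\<gamma> \<ge> 0" and a: "0 < a" "a \<le> t" "t \<le> b" and x: "x > 0"
  shows "\<bar>-3/(2*x) + \<delta>\<^sup>2*t\<^sup>2/(2*x\<^sup>2) - \<gamma>\<^sup>2/2\<bar> \<le> (3/2 + \<delta>\<^sup>2*b\<^sup>2/2 + \<gamma>\<^sup>2/2) * (1 + 1/x)^2"
proof -
  define u where "u = 1/x"
  have u: "u \<ge> 0" unfolding u_def using x by simp
  have t: "t > 0" using a by linarith
  have e1: "3/(2*x) = 3/2 * u" by (simp add: u_def)
  have e2: "\<delta>\<^sup>2*t\<^sup>2/(2*x\<^sup>2) = \<delta>\<^sup>2*t\<^sup>2/2 * u\<^sup>2" by (simp add: u_def power2_eq_square)
  have tb: "\<delta>\<^sup>2*t\<^sup>2/2 \<le> \<delta>\<^sup>2*b\<^sup>2/2" using a by (intro divide_right_mono mult_left_mono power_mono) auto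
  have s1: "u \<le> (1+u)^2" "u\<^sup>2 \<le> (1+u)^2" "1 \<le> (1+u)^2" using u by (auto simp: power2_eq_square algebra_simps)
  have "\<bar>-3/(2*x) + \<delta>\<^sup>2*t\<^sup>2/(2*x\<^sup>2) - \<gamma>\<^sup>2/2\<bar> = \<bar>-(3/2 * u) + \<delta>\<^sup>2*t\<^sup>2/2 * u\<^sup>2 - \<gamma>\<^sup>2/2\<bar>"
    by (simp add: e1 e2)
  also have "\<dots> \<le> 3/2 * u + \<delta>\<^sup>2*t\<^sup>2/2 * u\<^sup>2 + \<gamma>\<^sup>2/2"
    using u t by (simp add: abs_le_iff)
  also have "\<dots> \<le> 3/2 * (1+u)^2 + \<delta>\<^sup>2*b\<^sup>2/2 * (1+u)^2 + \<gamma>\<^sup>2/2 * (1+u)^2"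
  proof -
    have "3/2 * u \<le> 3/2 * (1+u)^2" using s1 by simp
    moreover have "\<delta>\<^sup>2*t\<^sup>2/2 * u\<^sup>2 \<le> \<delta>\<^sup>2*b\<^sup>2/2 * (1+u)^2" using tb s1 by (intro mult_mono) auto
    moreover have "\<gamma>\<^sup>2/2 \<le> \<gamma>\<^sup>2/2 * (1+u)^2" using s1 by (intro mult_le_cancel_left1[THEN iffD2]) auto
    ultimately show ?thesis by linarith
  qed
  also have "\<dots> = (3/2 + \<delta>\<^sup>2*b\<^sup>2/2 + \<gamma>\<^sup>2/2) * (1 + 1/x)^2" by (simp add: algebra_simps u_def)
  finally show ?thesis .
qed

lemma E_integrable:
  fixes c :: real assumes c: "c > 0"
  shows "set_integrable lborel {0<..} (\<lambda>x. exp (- c * x))"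
proof -
  have "(\<lambda>x. exp (- c * x)) integrable_on {0..}"
    using integrable_on_exp_minus_to_infinity[OF c, of 0] by simp
  then have "(\<lambda>x. exp (- c * x)) absolutely_integrable_on {0..}"
    by (rule nonnegative_absolutely_integrable_1) simp
  then have "integrable lebesgue (\<lambda>x. indicator {0..} x *\<^sub>R exp (- c * x))"
    unfolding set_integrable_def .
  then have "integrable lborel (\<lambda>x. indicator {0..} x *\<^sub>R exp (- c * x))"
    by (subst (asm) integrable_completion) measurable
  then have "set_integrable lborel {0..} (\<lambda>x. exp (- c * x))"
    unfolding set_integrable_def .
  then show ?thesis by (rule set_integrable_subset) auto
qed

lemma int_by_E:
  fixes \<phi> :: "real \<Rightarrow> real" and c C :: real
  assumes c: "c > 0" and m: "\<phi> \<in> borel_measurable lborel"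
    and b: "\<And>x. x > 0 \<Longrightarrow> \<bar>\<phi> x\<bar> \<le> C * exp (- c * x)"
  shows "set_integrable lborel {0<..} \<phi>"
proof (rule set_integrable_bound[where f = "\<lambda>x. C * exp (- c * x)"])
  show "set_integrable lborel {0<..} (\<lambda>x. C * exp (- c * x))"
    using E_integrable[OF c] by (intro set_integrable_mult_right) auto
  show "set_borel_measurable lborel {0<..} \<phi>"
    unfolding set_borel_measurable_def using m by measurable
  have "0 \<le> C * exp (- c * 1)" using b[of 1] abs_ge_zero[of "\<phi> 1"] by linarith
  then have C: "C \<ge> 0" by (simp add: zero_le_mult_iff)
  show "AE x in lborel. x \<in> {0<..} \<longrightarrow> norm (\<phi> x) \<le> norm (C * exp (- c * x))"
    using b C by (auto simp: abs_mult)
qed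

lemma ig_meas[measurable]: "(\<lambda>x. ig_density \<delta> \<gamma> x t) \<in> borel_measurable lborel"
  unfolding ig_density_def by measurable
lemma gt_meas[measurable]: "(\<lambda>x. gt \<delta> \<gamma> x t) \<in> borel_measurable lborel"
  unfolding gt_def by measurable
lemma gtt_meas[measurable]: "(\<lambda>x. gtt \<delta> \<gamma> x t) \<in> borel_measurable lborel"
  unfolding gtt_def by measurable
lemma gx_meas[measurable]: "(\<lambda>x. gx \<delta> \<gamma> x t) \<in> borel_measurable lborel"
  unfolding gx_def by measurable

lemma lim0: "((\<lambda>x::real. 1 / (1 + 1/x)^2) \<longlongrightarrow> 0) (at_right 0)"
  by real_asymp

lemma limtop: assumes "c > 0" shows "((\<lambda>x::real. exp (- c * x)) \<longlongrightarrow> 0) at_top"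
  using assms by real_asymp

lemma Fmono: "\<bar>F\<bar> \<le> M * (1 + 1/x)^2 \<Longrightarrow> M \<le> M' \<Longrightarrow> \<bar>F\<bar> \<le> M' * (1 + 1/(x::real))^2"
proof -
  assume a: "\<bar>F\<bar> \<le> M * (1 + 1/x)^2" and b: "M \<le> M'"
  have "M * (1 + 1/x)^2 \<le> M' * (1 + 1/x)^2" using b by (intro mult_right_mono) auto
  then show ?thesis using a by linarith
qed

lemma dom_exists:
  fixes \<delta> \<gamma> a b :: real
  assumes d: "\<delta> > 0" and g: "\<gamma> \<ge> 0" and a: "0 < a"
  shows "\<exists>K. \<forall>t x. a \<le> t \<longrightarrow> t \<le> b \<longrightarrow> x > 0 \<longrightarrow>
     \<bar>ig_density \<delta> \<gamma> x t\<bar> \<le> K * exp (- (\<gamma>\<^sup>2/2) * x) \<and>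
     \<bar>gt \<delta> \<gamma> x t\<bar> \<le> K * exp (- (\<gamma>\<^sup>2/2) * x) \<and>
     \<bar>gtt \<delta> \<gamma> x t\<bar> \<le> K * exp (- (\<gamma>\<^sup>2/2) * x) \<and>
     \<bar>gx \<delta> \<gamma> x t\<bar> \<le> K * exp (- (\<gamma>\<^sup>2/2) * x)"
proof -
  define M1 where "M1 = 1/a + \<delta>*\<gamma> + \<delta>\<^sup>2*b"
  define M2 where "M2 = (1/a + \<delta>*\<gamma> + \<delta>\<^sup>2*b)\<^sup>2 + 1/a\<^sup>2 + \<delta>\<^sup>2"
  define M3 where "M3 = 3/2 + \<delta>\<^sup>2*b\<^sup>2/2 + \<gamma>\<^sup>2/2"
  define Ma where "Ma = 1 + \<bar>M1\<bar> + \<bar>M2\<bar> + \<bar>M3\<bar>"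
  define K where "K = \<delta>*b*exp(\<delta>*\<gamma>*b) * Ma * (1 / (min 1 ((\<delta>\<^sup>2*a\<^sup>2/2)/4)) ^ 4)"
  have le: "1 \<le> Ma" "M1 \<le> Ma" "M2 \<le> Ma" "M3 \<le> Ma" unfolding Ma_def by auto
  show ?thesis
  proof (intro exI allI impI conjI)
    fix t x :: real assume t1: "a \<le> t" and t2: "t \<le> b" and x: "x > 0"
    note ab = a t1 t2
    have F0: "\<bar>1::real\<bar> \<le> Ma * (1 + 1/x)^2"
      using Fmono[of 1 1 x Ma] le x by simp
    have "\<bar>ig_density \<delta> \<gamma> x t * 1\<bar> \<le> K * exp (- (\<gamma>\<^sup>2/2) * x)"
      using igF_bound[OF d g ab x F0] unfolding K_def .
    then show "\<bar>ig_density \<delta> \<gamma> x t\<bar> \<le> K * exp (- (\<gamma>\<^sup>2/2) * x)" by simp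
    have F1: "\<bar>1/t + \<delta>*\<gamma> - \<delta>\<^sup>2*t/x\<bar> \<le> Ma * (1 + 1/x)^2"
    proof -
      have "\<bar>1/t + \<delta>*\<gamma> - \<delta>\<^sup>2*t/x\<bar> \<le> M1 * (1 + 1/x)" using L1_bound[OF d g ab x] unfolding M1_def .
      also have "\<dots> \<le> M1 * (1 + 1/x)^2"
      proof (rule lin_le_sq[OF x])
        have "0 \<le> 1/a" "0 \<le> \<delta>*\<gamma>" "0 \<le> \<delta>\<^sup>2*b" using a g d t1 t2 by auto
        then show "0 \<le> M1" unfolding M1_def by linarith
      qed
      finally show ?thesis using Fmono le by blast
    qed
    show "\<bar>gt \<delta> \<gamma> x t\<bar> \<le> K * exp (- (\<gamma>\<^sup>2/2) * x)"
      using igF_bound[OF d g ab x F1] unfolding K_def gt_def .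
    have F2: "\<bar>(1/t + \<delta>*\<gamma> - \<delta>\<^sup>2*t/x)\<^sup>2 - 1/t\<^sup>2 - \<delta>\<^sup>2/x\<bar> \<le> Ma * (1 + 1/x)^2"
      using Fmono[OF L2_bound[OF d g ab x]] le unfolding M2_def by blast
    show "\<bar>gtt \<delta> \<gamma> x t\<bar> \<le> K * exp (- (\<gamma>\<^sup>2/2) * x)"
      using igF_bound[OF d g ab x F2] unfolding K_def gtt_def .
    have F3: "\<bar>-3/(2*x) + \<delta>\<^sup>2*t\<^sup>2/(2*x\<^sup>2) - \<gamma>\<^sup>2/2\<bar> \<le> Ma * (1 + 1/x)^2"
      using Fmono[OF L3_bound[OF d g ab x]] le unfolding M3_def by blast
    show "\<bar>gx \<delta> \<gamma> x t\<bar> \<le> K * exp (- (\<gamma>\<^sup>2/2) * x)"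
      using igF_bound[OF d g ab x F3] unfolding K_def gx_def .
  qed
qed

lemma int_all:
  fixes \<phi> :: "real \<Rightarrow> real" and \<delta> \<gamma> B t :: real
  assumes d: "\<delta> > 0" and g: "\<gamma> > 0" and m: "\<phi> \<in> borel_measurable lborel"
    and bd: "\<And>x. x > 0 \<Longrightarrow> \<bar>\<phi> x\<bar> \<le> B" and t: "t > 0"
  shows "set_integrable lborel {0<..} (\<lambda>x. \<phi> x * ig_density \<delta> \<gamma> x t)"
    "set_integrable lborel {0<..} (\<lambda>x. \<phi> x * gt \<delta> \<gamma> x t)"
    "set_integrable lborel {0<..} (\<lambda>x. \<phi> x * gtt \<delta> \<gamma> x t)"
    "set_integrable lborel {0<..} (\<lambda>x. \<phi> x * gx \<delta> \<gamma> x t)"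
proof -
  note [measurable] = m
  obtain K where K: "\<And>t' x. t \<le> t' \<Longrightarrow> t' \<le> t \<Longrightarrow> x > 0 \<Longrightarrow>
     \<bar>ig_density \<delta> \<gamma> x t'\<bar> \<le> K * exp (- (\<gamma>\<^sup>2/2) * x) \<and>
     \<bar>gt \<delta> \<gamma> x t'\<bar> \<le> K * exp (- (\<gamma>\<^sup>2/2) * x) \<and>
     \<bar>gtt \<delta> \<gamma> x t'\<bar> \<le> K * exp (- (\<gamma>\<^sup>2/2) * x) \<and>
     \<bar>gx \<delta> \<gamma> x t'\<bar> \<le> K * exp (- (\<gamma>\<^sup>2/2) * x)"
    using dom_exists[OF d less_imp_le[OF g] t, of t] by blast
  have c: "\<gamma>\<^sup>2/2 > 0" using g by simp
  have prod: "\<bar>\<phi> x * G\<bar> \<le> (B * K) * exp (- (\<gamma>\<^sup>2/2) * x)"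
    if "x > 0" "\<bar>G\<bar> \<le> K * exp (- (\<gamma>\<^sup>2/2) * x)" for x G
  proof -
    have "\<bar>\<phi> x * G\<bar> = \<bar>\<phi> x\<bar> * \<bar>G\<bar>" by (simp add: abs_mult)
    also have "\<dots> \<le> B * (K * exp (- (\<gamma>\<^sup>2/2) * x))"
      using bd[OF that(1)] that(2) by (intro mult_mono) auto
    finally show ?thesis by simp
  qed
  show "set_integrable lborel {0<..} (\<lambda>x. \<phi> x * ig_density \<delta> \<gamma> x t)"
    by (rule int_by_E[OF c]) (measurable, use prod K in auto)
  show "set_integrable lborel {0<..} (\<lambda>x. \<phi> x * gt \<delta> \<gamma> x t)"
    by (rule int_by_E[OF c]) (measurable, use prod K in auto)
  show "set_integrable lborel {0<..} (\<lambda>x. \<phi> x * gtt \<delta> \<gamma> x t)"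
    by (rule int_by_E[OF c]) (measurable, use prod K in auto)
  show "set_integrable lborel {0<..} (\<lambda>x. \<phi> x * gx \<delta> \<gamma> x t)"
    by (rule int_by_E[OF c]) (measurable, use prod K in auto)
qed

lemma deriv_gen:
  fixes \<phi> :: "real \<Rightarrow> real" and \<delta> \<gamma> B t0 :: real and G G' :: "real \<Rightarrow> real \<Rightarrow> real"
  assumes d: "\<delta> > 0" and g: "\<gamma> > 0" and m: "\<phi> \<in> borel_measurable lborel"
    and bd: "\<And>x. x > 0 \<Longrightarrow> \<bar>\<phi> x\<bar> \<le> B" and t0: "t0 > 0"
    and Gd: "\<And>x t. x > 0 \<Longrightarrow> t > 0 \<Longrightarrow> ((\<lambda>t. G x t) has_real_derivative G' x t) (at t)"
    and Gi: "\<And>t. t > 0 \<Longrightarrow> set_integrable lborel {0<..} (\<lambda>x. \<phi> x * G x t)"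
    and Gm: "(\<lambda>x. G' x t0) \<in> borel_measurable lborel"
    and Gb: "\<And>K t x. (\<And>t x. t0/2 \<le> t \<Longrightarrow> t \<le> 2*t0 \<Longrightarrow> x > 0 \<Longrightarrow>
        \<bar>ig_density \<delta> \<gamma> x t\<bar> \<le> K * exp (- (\<gamma>\<^sup>2/2) * x) \<and>
        \<bar>gt \<delta> \<gamma> x t\<bar> \<le> K * exp (- (\<gamma>\<^sup>2/2) * x) \<and>
        \<bar>gtt \<delta> \<gamma> x t\<bar> \<le> K * exp (- (\<gamma>\<^sup>2/2) * x) \<and>
        \<bar>gx \<delta> \<gamma> x t\<bar> \<le> K * exp (- (\<gamma>\<^sup>2/2) * x)) \<Longrightarrow>
        t0/2 < t \<Longrightarrow> t < 2*t0 \<Longrightarrow> x > 0 \<Longrightarrow> \<bar>G' x t\<bar> \<le> K * exp (- (\<gamma>\<^sup>2/2) * x)"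
  shows "((\<lambda>t. LINT x:{0<..}|lborel. \<phi> x * G x t) has_real_derivative (LINT x:{0<..}|lborel. \<phi> x * G' x t0)) (at t0)"
proof -
  note [measurable] = m Gm
  obtain K where K: "\<And>t x. t0/2 \<le> t \<Longrightarrow> t \<le> 2*t0 \<Longrightarrow> x > 0 \<Longrightarrow>
     \<bar>ig_density \<delta> \<gamma> x t\<bar> \<le> K * exp (- (\<gamma>\<^sup>2/2) * x) \<and>
     \<bar>gt \<delta> \<gamma> x t\<bar> \<le> K * exp (- (\<gamma>\<^sup>2/2) * x) \<and>
     \<bar>gtt \<delta> \<gamma> x t\<bar> \<le> K * exp (- (\<gamma>\<^sup>2/2) * x) \<and>
     \<bar>gx \<delta> \<gamma> x t\<bar> \<le> K * exp (- (\<gamma>\<^sup>2/2) * x)"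
    using dom_exists[OF d less_imp_le[OF g], of "t0/2" "2*t0"] t0 by auto
  have c: "\<gamma>\<^sup>2/2 > 0" using g by simp
  show ?thesis
  proof (rule DERIV_set_integral[where a = "t0/2" and b = "2*t0" and D = "\<lambda>x. (B * K) * exp (- (\<gamma>\<^sup>2/2) * x)"])
    show "t0/2 < t0" "t0 < 2*t0" using t0 by auto
    show "((\<lambda>t. \<phi> x * G x t) has_real_derivative \<phi> x * G' x t) (at t)"
      if "x \<in> {0<..}" "t0/2 < t" "t < 2*t0" for x t
      using that t0 by (intro DERIV_cmult Gd) auto
    show "set_integrable lborel {0<..} (\<lambda>x. \<phi> x * G x t)" if "t0/2 < t" "t < 2*t0" for t
      using that t0 by (intro Gi) auto
    show "(\<lambda>x. indicator {0<..} x * (\<phi> x * G' x t0)) \<in> borel_measurable lborel"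
      by measurable
    show "set_integrable lborel {0<..} (\<lambda>x. (B * K) * exp (- (\<gamma>\<^sup>2/2) * x))"
      using E_integrable[OF c] by (intro set_integrable_mult_right) auto
    show "\<bar>\<phi> x * G' x t\<bar> \<le> (B * K) * exp (- (\<gamma>\<^sup>2/2) * x)"
      if "x \<in> {0<..}" "t0/2 < t" "t < 2*t0" for x t
    proof -
      have "\<bar>\<phi> x * G' x t\<bar> = \<bar>\<phi> x\<bar> * \<bar>G' x t\<bar>" by (simp add: abs_mult)
      also have "\<dots> \<le> B * (K * exp (- (\<gamma>\<^sup>2/2) * x))"
        using bd[of x] Gb[OF K, of t x] that by (intro mult_mono) auto
      finally show ?thesis by simp
    qed
  qed
qed

lemma deriv1:
  fixes \<phi> :: "real \<Rightarrow> real" and \<delta> \<gamma> B t0 :: real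
  assumes d: "\<delta> > 0" and g: "\<gamma> > 0" and m: "\<phi> \<in> borel_measurable lborel"
    and bd: "\<And>x. x > 0 \<Longrightarrow> \<bar>\<phi> x\<bar> \<le> B" and t0: "t0 > 0"
  shows "((\<lambda>t. LINT x:{0<..}|lborel. \<phi> x * ig_density \<delta> \<gamma> x t) has_real_derivative (LINT x:{0<..}|lborel. \<phi> x * gt \<delta> \<gamma> x t0)) (at t0)"
  by (rule deriv_gen[OF d g m bd t0]) (auto intro: ig_dt int_all[OF d g m bd])

lemma deriv2:
  fixes \<phi> :: "real \<Rightarrow> real" and \<delta> \<gamma> B t0 :: real
  assumes d: "\<delta> > 0" and g: "\<gamma> > 0" and m: "\<phi> \<in> borel_measurable lborel"
    and bd: "\<And>x. x > 0 \<Longrightarrow> \<bar>\<phi> x\<bar> \<le> B" and t0: "t0 > 0"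
  shows "((\<lambda>t. LINT x:{0<..}|lborel. \<phi> x * gt \<delta> \<gamma> x t) has_real_derivative (LINT x:{0<..}|lborel. \<phi> x * gtt \<delta> \<gamma> x t0)) (at t0)"
  by (rule deriv_gen[OF d g m bd t0]) (auto intro: gt_dt int_all[OF d g m bd])

lemma ig_isCont: "x > 0 \<Longrightarrow> isCont (\<lambda>x. ig_density \<delta> \<gamma> x t) x"
  by (rule DERIV_isCont[OF ig_dx])

lemma gx_isCont: assumes "x > 0" shows "isCont (\<lambda>x. gx \<delta> \<gamma> x t) x"
proof -
  have "isCont (\<lambda>x. ig_density \<delta> \<gamma> x t * (-3/(2*x) + \<delta>\<^sup>2*t\<^sup>2/(2*x\<^sup>2) - \<gamma>\<^sup>2/2)) x"
    using assms by (intro isCont_mult ig_isCont continuous_intros) auto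
  then show ?thesis unfolding gx_def .
qed

lemma ig_small:
  fixes \<delta> \<gamma> t x :: real
  assumes d: "\<delta> > 0" and g: "\<gamma> > 0" and t: "t > 0" and x: "x > 0"
  shows "\<bar>ig_density \<delta> \<gamma> x t\<bar> \<le> (\<delta>*t*exp(\<delta>*\<gamma>*t) * 1 * (1 / (min 1 ((\<delta>\<^sup>2*t\<^sup>2/2)/4)) ^ 4)) * (1 / (1 + 1/x)^2)"
proof -
  define C where "C = \<delta>*t*exp(\<delta>*\<gamma>*t) * 1 * (1 / (min 1 ((\<delta>\<^sup>2*t\<^sup>2/2)/4)) ^ 4)"
  have F: "\<bar>(1 + 1/x)^2\<bar> \<le> 1 * (1 + 1/x)^2" by simp
  have "\<bar>ig_density \<delta> \<gamma> x t * (1 + 1/x)^2\<bar> \<le> C * exp(-(\<gamma>\<^sup>2/2)*x)"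
    using igF_bound[OF d less_imp_le[OF g] t order_refl order_refl x F] unfolding C_def .
  also have "\<dots> \<le> C * 1"
  proof (rule mult_left_mono)
    show "exp(-(\<gamma>\<^sup>2/2)*x) \<le> 1" using x by simp
    show "0 \<le> C" unfolding C_def using d t by simp
  qed
  finally have "\<bar>ig_density \<delta> \<gamma> x t\<bar> * (1 + 1/x)^2 \<le> C" by (simp add: abs_mult)
  moreover have "(1 + 1/x)^2 > 0" using x by (intro zero_less_power) (simp add: add_pos_pos)
  ultimately have "\<bar>ig_density \<delta> \<gamma> x t\<bar> \<le> C / (1 + 1/x)^2" by (simp add: field_simps)
  then show ?thesis unfolding C_def by simp
qed

lemma ftc_gen:
  fixes \<phi> \<phi>' :: "real \<Rightarrow> real" and \<delta> \<gamma> B B' t :: real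
  assumes d: "\<delta> > 0" and g: "\<gamma> > 0" and m: "\<phi> \<in> borel_measurable lborel" and m': "\<phi>' \<in> borel_measurable lborel"
    and bd: "\<And>x. x > 0 \<Longrightarrow> \<bar>\<phi> x\<bar> \<le> B" and bd': "\<And>x. x > 0 \<Longrightarrow> \<bar>\<phi>' x\<bar> \<le> B'"
    and der: "\<And>x. x > 0 \<Longrightarrow> (\<phi> has_real_derivative \<phi>' x) (at x)"
    and cont: "\<And>x. x > 0 \<Longrightarrow> isCont \<phi>' x"
    and t: "t > 0"
  shows "(LINT x:{0<..}|lborel. \<phi> x * gx \<delta> \<gamma> x t) = - (LINT x:{0<..}|lborel. \<phi>' x * ig_density \<delta> \<gamma> x t)"
proof -
  let ?F = "\<lambda>x. \<phi> x * ig_density \<delta> \<gamma> x t"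
  let ?f = "\<lambda>x. \<phi>' x * ig_density \<delta> \<gamma> x t + \<phi> x * gx \<delta> \<gamma> x t"
  have I1: "set_integrable lborel {0<..} (\<lambda>x. \<phi> x * gx \<delta> \<gamma> x t)"
    using int_all[OF d g m bd t] by simp
  have I2: "set_integrable lborel {0<..} (\<lambda>x. \<phi>' x * ig_density \<delta> \<gamma> x t)"
    using int_all[OF d g m' bd' t] by simp
  have ein: "einterval 0 \<infinity> = {0::real<..}" by (simp add: zero_ereal_def)
  have "(LBINT x=0..\<infinity>. ?f x) = 0 - 0"
  proof (rule interval_integral_FTC_integrable)
    show "(0::ereal) < \<infinity>" by simp
    fix x :: real assume x0: "0 < ereal x" and "ereal x < \<infinity>"
    then have x: "x > 0" by (simp add: zero_ereal_def)
    have "(?F has_real_derivative (\<phi>' x * ig_density \<delta> \<gamma> x t + gx \<delta> \<gamma> x t * \<phi> x)) (at x)"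
      by (rule DERIV_mult[OF der[OF x] ig_dx[OF x]])
    then show "(?F has_vector_derivative ?f x) (at x)"
      by (simp add: has_real_derivative_iff_has_vector_derivative[symmetric] mult.commute)
    show "isCont ?f x"
      using x by (intro continuous_intros cont ig_isCont gx_isCont DERIV_isCont[OF der]) auto
  next
    show "set_integrable lborel (einterval 0 \<infinity>) ?f"
      unfolding ein by (rule set_integral_add(1)[OF I2 I1])
  next
    define C where "C = \<delta>*t*exp(\<delta>*\<gamma>*t) * 1 * (1 / (min 1 ((\<delta>\<^sup>2*t\<^sup>2/2)/4)) ^ 4)"
    have B0: "B \<ge> 0" using bd[of 1] by simp
    have "(?F \<longlongrightarrow> 0) (at_right 0)"
    proof (rule Lim_null_comparison)
      show "\<forall>\<^sub>F x in at_right 0. norm (?F x) \<le> (B * C) * (1 / (1 + 1/x)^2)"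
        using eventually_at_right_less[of "0::real"]
      proof eventually_elim
        case (elim x)
        have "\<bar>?F x\<bar> = \<bar>\<phi> x\<bar> * \<bar>ig_density \<delta> \<gamma> x t\<bar>" by (simp add: abs_mult)
        also have "\<dots> \<le> B * (C * (1 / (1 + 1/x)^2))"
          using bd[OF elim] ig_small[OF d g t elim] B0 unfolding C_def by (intro mult_mono) auto
        finally show ?case by simp
      qed
      show "((\<lambda>x. (B * C) * (1 / (1 + 1/x)^2)) \<longlongrightarrow> 0) (at_right 0)"
        using tendsto_mult[OF tendsto_const[of "B * C"] lim0] by simp
    qed
    then show "((?F \<circ> real_of_ereal) \<longlongrightarrow> 0) (at_right 0)"
      by (simp add: zero_ereal_def ereal_tendsto_simps)
  next
    obtain K where K: "\<And>t' x. t \<le> t' \<Longrightarrow> t' \<le> t \<Longrightarrow> x > 0 \<Longrightarrow>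
       \<bar>ig_density \<delta> \<gamma> x t'\<bar> \<le> K * exp (- (\<gamma>\<^sup>2/2) * x) \<and>
       \<bar>gt \<delta> \<gamma> x t'\<bar> \<le> K * exp (- (\<gamma>\<^sup>2/2) * x) \<and>
       \<bar>gtt \<delta> \<gamma> x t'\<bar> \<le> K * exp (- (\<gamma>\<^sup>2/2) * x) \<and>
       \<bar>gx \<delta> \<gamma> x t'\<bar> \<le> K * exp (- (\<gamma>\<^sup>2/2) * x)"
      using dom_exists[OF d less_imp_le[OF g] t, of t] by blast
    have B0: "B \<ge> 0" using bd[of 1] by simp
    have c: "\<gamma>\<^sup>2/2 > 0" using g by simp
    have "(?F \<longlongrightarrow> 0) at_top"
    proof (rule Lim_null_comparison)
      show "\<forall>\<^sub>F x in at_top. norm (?F x) \<le> (B * K) * exp (- (\<gamma>\<^sup>2/2) * x)"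
        using eventually_gt_at_top[of "0::real"]
      proof eventually_elim
        case (elim x)
        have "\<bar>?F x\<bar> = \<bar>\<phi> x\<bar> * \<bar>ig_density \<delta> \<gamma> x t\<bar>" by (simp add: abs_mult)
        also have "\<dots> \<le> B * (K * exp (- (\<gamma>\<^sup>2/2) * x))"
          using bd[OF elim] K[OF order_refl order_refl elim] B0 by (intro mult_mono) auto
        finally show ?case by simp
      qed
      show "((\<lambda>x. (B * K) * exp (- (\<gamma>\<^sup>2/2) * x)) \<longlongrightarrow> 0) at_top"
        using tendsto_mult[OF tendsto_const[of "B * K"] limtop[OF c]] by simp
    qed
    then show "((?F \<circ> real_of_ereal) \<longlongrightarrow> 0) (at_left \<infinity>)"
      by (simp add: ereal_tendsto_simps)
  qed
  moreover have "(LBINT x=0..\<infinity>. ?f x) = (LINT x:{0<..}|lborel. ?f x)"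
    unfolding interval_lebesgue_integral_def ein by simp
  moreover have "(LINT x:{0<..}|lborel. ?f x) = (LINT x:{0<..}|lborel. \<phi>' x * ig_density \<delta> \<gamma> x t) + (LINT x:{0<..}|lborel. \<phi> x * gx \<delta> \<gamma> x t)"
    by (rule set_integral_add(2)[OF I2 I1])
  ultimately show ?thesis by linarith
qed

lemma set_integral_sum_gen:
  fixes f :: "'i \<Rightarrow> 'a \<Rightarrow> real"
  assumes "finite I" "\<And>i. i \<in> I \<Longrightarrow> set_integrable M A (f i)"
  shows "set_integrable M A (\<lambda>x. \<Sum>i\<in>I. f i x) \<and> (LINT x:A|M. (\<Sum>i\<in>I. f i x)) = (\<Sum>i\<in>I. LINT x:A|M. f i x)"
  using assms
proof (induction I rule: finite_induct)
  case empty
  then show ?case by (simp add: set_integrable_def set_lebesgue_integral_def)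
next
  case (insert a I)
  have ia: "set_integrable M A (f a)" using insert by simp
  have iI: "set_integrable M A (\<lambda>x. \<Sum>i\<in>I. f i x)" and eI: "(LINT x:A|M. (\<Sum>i\<in>I. f i x)) = (\<Sum>i\<in>I. LINT x:A|M. f i x)"
    using insert by auto
  show ?case using insert.hyps set_integral_add[OF ia iI] eI by simp
qed

lemma int_if:
  fixes g :: "'a \<Rightarrow> real"
  assumes "set_integrable M A g"
  shows "set_integrable M A (\<lambda>x. if c then a * g x else 0) \<and> (LINT x:A|M. (if c then a * g x else 0)) = (if c then a * (LINT x:A|M. g x) else 0)"
proof (cases c)
  case True
  have "set_integrable M A (\<lambda>x. a * g x)" using assms by (intro set_integrable_mult_right)
  then show ?thesis using True by simp
next
  case False
  then show ?thesis by (simp add: set_integrable_def set_lebesgue_integral_def)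
qed

lemma isCont_if_const: "isCont g x \<Longrightarrow> isCont (\<lambda>x. if c then g x else 0) x"
  by (cases c) auto

context
  fixes q :: nat and k :: "nat \<Rightarrow> nat" and lam :: "nat \<Rightarrow> nat \<Rightarrow> real" and \<delta> \<gamma> :: real
  assumes lam: "\<And>i j. i < q \<Longrightarrow> j \<in> {1..k i} \<Longrightarrow> lam i j > 0"
    and d: "\<delta> > 0" and g: "\<gamma> > 0"
begin

definition "LL = (\<Sum>i<q. \<Sum>j=1..k i. lam i j)"
definition "DD n x = - LL * mgcp_pmf q k lam n x
   + (\<Sum>i<q. \<Sum>j=1..k i. lam i j * (if j \<le> n i then mgcp_pmf q k lam (n(i := n i - j)) x else 0))"
definition "Bf n = (\<Prod>i<q. real (card (gcp_omega (k i) (n i))))"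

lemma f_der: "(mgcp_pmf q k lam n has_real_derivative DD n x) (at x)"
  unfolding DD_def LL_def by (rule mgcp_deriv)

lemma f_cont: "isCont (mgcp_pmf q k lam n) x"
  by (rule DERIV_isCont[OF f_der])

lemma f_meas[measurable]: "mgcp_pmf q k lam n \<in> borel_measurable lborel"
proof -
  have "mgcp_pmf q k lam n \<in> borel_measurable borel"
    by (rule borel_measurable_continuous_onI[OF continuous_at_imp_continuous_on]) (simp add: f_cont)
  then show ?thesis by simp
qed

lemma f_bd: "x > 0 \<Longrightarrow> \<bar>mgcp_pmf q k lam n x\<bar> \<le> Bf n"
proof -
  assume x: "x > 0"
  have l: "\<And>i j. i < q \<Longrightarrow> j \<in> {1..k i} \<Longrightarrow> lam i j \<ge> 0" using lam by (simp add: less_imp_le)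
  show ?thesis using mgcp_bounds[OF l, where t = x and n = n] x unfolding Bf_def by simp
qed

lemma Bf_nonneg: "Bf n \<ge> 0"
  unfolding Bf_def by (simp add: prod_nonneg)

lemma D_cont: "isCont (DD n) x"
  unfolding DD_def[abs_def]
  by (intro continuous_intros f_cont isCont_if_const)

lemma D_meas[measurable]: "DD n \<in> borel_measurable lborel"
proof -
  have "DD n \<in> borel_measurable borel"
    by (rule borel_measurable_continuous_onI[OF continuous_at_imp_continuous_on]) (simp add: D_cont)
  then show ?thesis by simp
qed

lemma D_bd: "x > 0 \<Longrightarrow> \<bar>DD n x\<bar> \<le> \<bar>LL\<bar> * Bf n + (\<Sum>i<q. \<Sum>j=1..k i. \<bar>lam i j\<bar> * Bf (n(i := n i - j)))"
proof -
  assume x: "x > 0"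
  have t1: "\<bar>- LL * mgcp_pmf q k lam n x\<bar> \<le> \<bar>LL\<bar> * Bf n"
    using f_bd[OF x, of n] by (simp add: abs_mult mult_left_mono)
  have t2: "\<bar>\<Sum>i<q. \<Sum>j=1..k i. lam i j * (if j \<le> n i then mgcp_pmf q k lam (n(i := n i - j)) x else 0)\<bar>
      \<le> (\<Sum>i<q. \<Sum>j=1..k i. \<bar>lam i j\<bar> * Bf (n(i := n i - j)))"
  proof -
    have "\<bar>\<Sum>i<q. \<Sum>j=1..k i. lam i j * (if j \<le> n i then mgcp_pmf q k lam (n(i := n i - j)) x else 0)\<bar>
      \<le> (\<Sum>i<q. \<bar>\<Sum>j=1..k i. lam i j * (if j \<le> n i then mgcp_pmf q k lam (n(i := n i - j)) x else 0)\<bar>)"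
      by (rule sum_abs)
    also have "\<dots> \<le> (\<Sum>i<q. \<Sum>j=1..k i. \<bar>lam i j * (if j \<le> n i then mgcp_pmf q k lam (n(i := n i - j)) x else 0)\<bar>)"
      by (intro sum_mono sum_abs)
    also have "\<dots> \<le> (\<Sum>i<q. \<Sum>j=1..k i. \<bar>lam i j\<bar> * Bf (n(i := n i - j)))"
    proof (intro sum_mono)
      fix i j
      have "\<bar>(if j \<le> n i then mgcp_pmf q k lam (n(i := n i - j)) x else 0)\<bar> \<le> Bf (n(i := n i - j))"
        using f_bd[OF x] Bf_nonneg by auto
      then show "\<bar>lam i j * (if j \<le> n i then mgcp_pmf q k lam (n(i := n i - j)) x else 0)\<bar> \<le> \<bar>lam i j\<bar> * Bf (n(i := n i - j))"
        by (simp add: abs_mult mult_left_mono)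
    qed
    finally show ?thesis .
  qed
  show ?thesis unfolding DD_def using t1 t2 abs_triangle_ineq by (smt (verit))
qed

lemma TC_eq: "tc_pmf q k lam \<delta> \<gamma> n = (\<lambda>t. LINT x:{0<..}|lborel. mgcp_pmf q k lam n x * ig_density \<delta> \<gamma> x t)"
  by (rule ext) (simp add: tc_pmf_def)

lemma TC_d1: "t > 0 \<Longrightarrow> (tc_pmf q k lam \<delta> \<gamma> n has_real_derivative (LINT x:{0<..}|lborel. mgcp_pmf q k lam n x * gt \<delta> \<gamma> x t)) (at t)"
  unfolding TC_eq by (rule deriv1[OF d g f_meas f_bd])

lemma TC_d2: "t > 0 \<Longrightarrow> ((\<lambda>t. LINT x:{0<..}|lborel. mgcp_pmf q k lam n x * gt \<delta> \<gamma> x t) has_real_derivative (LINT x:{0<..}|lborel. mgcp_pmf q k lam n x * gtt \<delta> \<gamma> x t)) (at t)"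
  by (rule deriv2[OF d g f_meas f_bd])

lemma key_identity:
  assumes t: "t > 0"
  shows "(LINT x:{0<..}|lborel. mgcp_pmf q k lam n x * gtt \<delta> \<gamma> x t) - 2 * \<delta> * \<gamma> * (LINT x:{0<..}|lborel. mgcp_pmf q k lam n x * gt \<delta> \<gamma> x t)
     = 2 * \<delta>\<^sup>2 * (\<Sum>i<q. \<Sum>j=1..k i. lam i j) * tc_pmf q k lam \<delta> \<gamma> n t
       - 2 * \<delta>\<^sup>2 * (\<Sum>i<q. \<Sum>j=1..k i. lam i j * tc_pmf_shift q k lam \<delta> \<gamma> n i j t)"
proof -
  let ?f = "mgcp_pmf q k lam"
  note I = int_all[OF d g f_meas f_bd t]
  have s1: "(LINT x:{0<..}|lborel. ?f n x * gtt \<delta> \<gamma> x t) - 2 * \<delta> * \<gamma> * (LINT x:{0<..}|lborel. ?f n x * gt \<delta> \<gamma> x t)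
      = (LINT x:{0<..}|lborel. ?f n x * gtt \<delta> \<gamma> x t - (2 * \<delta> * \<gamma>) * (?f n x * gt \<delta> \<gamma> x t))"
  proof -
    have "set_integrable lborel {0<..} (\<lambda>x. (2 * \<delta> * \<gamma>) * (?f n x * gt \<delta> \<gamma> x t))"
      using I(2) by (intro set_integrable_mult_right)
    then show ?thesis using set_integral_diff(2)[OF I(3)] by simp
  qed
  have s2: "(LINT x:{0<..}|lborel. ?f n x * gtt \<delta> \<gamma> x t - (2 * \<delta> * \<gamma>) * (?f n x * gt \<delta> \<gamma> x t))
      = (LINT x:{0<..}|lborel. (2 * \<delta>\<^sup>2) * (?f n x * gx \<delta> \<gamma> x t))"
  proof (rule set_lebesgue_integral_cong)
    show "{0::real<..} \<in> sets lborel" by simp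
    show "\<forall>x. x \<in> {0<..} \<longrightarrow> ?f n x * gtt \<delta> \<gamma> x t - (2 * \<delta> * \<gamma>) * (?f n x * gt \<delta> \<gamma> x t) = (2 * \<delta>\<^sup>2) * (?f n x * gx \<delta> \<gamma> x t)"
    proof (intro allI impI)
      fix x :: real assume "x \<in> {0<..}"
      then have x: "x > 0" by simp
      have "?f n x * gtt \<delta> \<gamma> x t - (2 * \<delta> * \<gamma>) * (?f n x * gt \<delta> \<gamma> x t) = ?f n x * (gtt \<delta> \<gamma> x t - 2 * \<delta> * \<gamma> * gt \<delta> \<gamma> x t)"
        by (simp add: algebra_simps)
      also have "\<dots> = ?f n x * (2 * \<delta>\<^sup>2 * gx \<delta> \<gamma> x t)" using pde[OF x t] by simp
      finally show "?f n x * gtt \<delta> \<gamma> x t - (2 * \<delta> * \<gamma>) * (?f n x * gt \<delta> \<gamma> x t) = (2 * \<delta>\<^sup>2) * (?f n x * gx \<delta> \<gamma> x t)"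
        by (simp add: algebra_simps)
    qed
  qed
  have s3: "(LINT x:{0<..}|lborel. (2 * \<delta>\<^sup>2) * (?f n x * gx \<delta> \<gamma> x t)) = 2 * \<delta>\<^sup>2 * (LINT x:{0<..}|lborel. ?f n x * gx \<delta> \<gamma> x t)"
    by simp
  have s4: "(LINT x:{0<..}|lborel. ?f n x * gx \<delta> \<gamma> x t) = - (LINT x:{0<..}|lborel. DD n x * ig_density \<delta> \<gamma> x t)"
    by (rule ftc_gen[OF d g f_meas D_meas f_bd D_bd f_der D_cont t])
  define S where "S = (\<Sum>i<q. \<Sum>j=1..k i. lam i j * tc_pmf_shift q k lam \<delta> \<gamma> n i j t)"
  have s5: "(LINT x:{0<..}|lborel. DD n x * ig_density \<delta> \<gamma> x t) = - LL * tc_pmf q k lam \<delta> \<gamma> n t + S"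
  proof -
    let ?h = "\<lambda>i j x. if j \<le> n i then lam i j * (?f (n(i := n i - j)) x * ig_density \<delta> \<gamma> x t) else 0"
    have pw: "DD n x * ig_density \<delta> \<gamma> x t = (- LL) * (?f n x * ig_density \<delta> \<gamma> x t) + (\<Sum>i<q. \<Sum>j=1..k i. ?h i j x)" for x
    proof -
      have e: "(\<Sum>i<q. \<Sum>j=1..k i. lam i j * (if j \<le> n i then ?f (n(i := n i - j)) x else 0)) * ig_density \<delta> \<gamma> x t = (\<Sum>i<q. \<Sum>j=1..k i. ?h i j x)"
        unfolding sum_distrib_right by (intro sum.cong refl) auto
      show ?thesis unfolding DD_def distrib_right e by (simp only: mult.assoc)
    qed
    have Ih: "set_integrable lborel {0<..} (?h i j) \<and> (LINT x:{0<..}|lborel. ?h i j x) = (if j \<le> n i then lam i j * tc_pmf q k lam \<delta> \<gamma> (n(i := n i - j)) t else 0)" for i j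
      using int_if[OF int_all(1)[OF d g f_meas f_bd t, of "n(i := n i - j)"], of "j \<le> n i" "lam i j"]
      by (simp add: tc_pmf_def)
    have Ii: "set_integrable lborel {0<..} (\<lambda>x. \<Sum>j=1..k i. ?h i j x) \<and> (LINT x:{0<..}|lborel. (\<Sum>j=1..k i. ?h i j x)) = (\<Sum>j=1..k i. (if j \<le> n i then lam i j * tc_pmf q k lam \<delta> \<gamma> (n(i := n i - j)) t else 0))" for i
      using set_integral_sum_gen[of "{1..k i}" lborel "{0<..}" "?h i"] Ih by simp
    have Iall: "set_integrable lborel {0<..} (\<lambda>x. \<Sum>i<q. \<Sum>j=1..k i. ?h i j x) \<and> (LINT x:{0<..}|lborel. (\<Sum>i<q. \<Sum>j=1..k i. ?h i j x)) = S"
      using set_integral_sum_gen[of "{..<q}" lborel "{0<..}" "\<lambda>i x. \<Sum>j=1..k i. ?h i j x"] Ii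
      unfolding S_def tc_pmf_shift_def by (simp add: if_distrib cong: if_cong)
    have I0: "set_integrable lborel {0<..} (\<lambda>x. (- LL) * (?f n x * ig_density \<delta> \<gamma> x t))"
      using I(1) by (intro set_integrable_mult_right)
    have "(LINT x:{0<..}|lborel. DD n x * ig_density \<delta> \<gamma> x t) = (LINT x:{0<..}|lborel. (- LL) * (?f n x * ig_density \<delta> \<gamma> x t) + (\<Sum>i<q. \<Sum>j=1..k i. ?h i j x))"
      by (simp only: pw)
    also have "\<dots> = (LINT x:{0<..}|lborel. (- LL) * (?f n x * ig_density \<delta> \<gamma> x t)) + S"
      using set_integral_add(2)[OF I0 conjunct1[OF Iall]] conjunct2[OF Iall] by simp
    also have "\<dots> = - LL * tc_pmf q k lam \<delta> \<gamma> n t + S"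
      by (simp only: set_integral_mult_right tc_pmf_def)
    finally show ?thesis .
  qed
  show ?thesis
    unfolding s1 s2 s3 s4 s5 S_def[symmetric] LL_def[symmetric] by (simp add: algebra_simps)
qed

lemma main_result:
  assumes t: "t > 0"
  shows "(tc_pmf q k lam \<delta> \<gamma> n) differentiable (at t) \<and>
     (deriv (tc_pmf q k lam \<delta> \<gamma> n)) differentiable (at t) \<and>
     deriv (deriv (tc_pmf q k lam \<delta> \<gamma> n)) t
       - 2 * \<delta> * \<gamma> * deriv (tc_pmf q k lam \<delta> \<gamma> n) t
     = 2 * \<delta>\<^sup>2 * (\<Sum>i<q. \<Sum>j=1..k i. lam i j) * tc_pmf q k lam \<delta> \<gamma> n t
       - 2 * \<delta>\<^sup>2 * (\<Sum>i<q. \<Sum>j=1..k i. lam i j * tc_pmf_shift q k lam \<delta> \<gamma> n i j t)"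
proof -
  let ?TC = "tc_pmf q k lam \<delta> \<gamma> n"
  let ?G1 = "\<lambda>t. LINT x:{0<..}|lborel. mgcp_pmf q k lam n x * gt \<delta> \<gamma> x t"
  let ?G2 = "\<lambda>t. LINT x:{0<..}|lborel. mgcp_pmf q k lam n x * gtt \<delta> \<gamma> x t"
  have D1: "(?TC has_real_derivative ?G1 t) (at t)" by (rule TC_d1[OF t])
  have dd: "deriv ?TC s = ?G1 s" if "s \<in> {0<..}" for s
    using TC_d1[of s] that by (intro DERIV_imp_deriv) auto
  have D2: "(deriv ?TC has_real_derivative ?G2 t) (at t)"
    by (rule has_field_derivative_transform_within_open[OF TC_d2[OF t], of "{0<..}"]) (use t dd in auto)
  have "?TC differentiable (at t)" using D1 unfolding differentiable_def has_field_derivative_def by blast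
  moreover have "deriv ?TC differentiable (at t)" using D2 unfolding differentiable_def has_field_derivative_def by blast
  moreover have "deriv (deriv ?TC) t = ?G2 t" by (rule DERIV_imp_deriv[OF D2])
  moreover have "deriv ?TC t = ?G1 t" using dd t by simp
  ultimately show ?thesis using key_identity[OF t] by simp
qed

end

theorem mainTheorem17:
  fixes q :: nat and k :: "nat \<Rightarrow> nat" and lam :: "nat \<Rightarrow> nat \<Rightarrow> real"
    and \<delta> \<gamma> :: real and n :: "nat \<Rightarrow> nat"
  assumes "q \<ge> 1"
    and "\<And>i. i < q \<Longrightarrow> k i \<ge> 1"
    and "\<And>i j. i < q \<Longrightarrow> j \<in> {1..k i} \<Longrightarrow> lam i j > 0"
    and "\<delta> > 0" and "\<gamma> > 0"
  shows "\<forall>t>0.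
     (tc_pmf q k lam \<delta> \<gamma> n) differentiable (at t) \<and>
     (deriv (tc_pmf q k lam \<delta> \<gamma> n)) differentiable (at t) \<and>
     deriv (deriv (tc_pmf q k lam \<delta> \<gamma> n)) t
       - 2 * \<delta> * \<gamma> * deriv (tc_pmf q k lam \<delta> \<gamma> n) t
     = 2 * \<delta>\<^sup>2 * (\<Sum>i<q. \<Sum>j=1..k i. lam i j) * tc_pmf q k lam \<delta> \<gamma> n t
       - 2 * \<delta>\<^sup>2 * (\<Sum>i<q. \<Sum>j=1..k i. lam i j * tc_pmf_shift q k lam \<delta> \<gamma> n i j t)"
proof (intro allI impI)
  fix t :: real assume t: "t > 0"
  show "(tc_pmf q k lam \<delta> \<gamma> n) differentiable (at t) \<and>
     (deriv (tc_pmf q k lam \<delta> \<gamma> n)) differentiable (at t) \<and>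
     deriv (deriv (tc_pmf q k lam \<delta> \<gamma> n)) t
       - 2 * \<delta> * \<gamma> * deriv (tc_pmf q k lam \<delta> \<gamma> n) t
     = 2 * \<delta>\<^sup>2 * (\<Sum>i<q. \<Sum>j=1..k i. lam i j) * tc_pmf q k lam \<delta> \<gamma> n t
       - 2 * \<delta>\<^sup>2 * (\<Sum>i<q. \<Sum>j=1..k i. lam i j * tc_pmf_shift q k lam \<delta> \<gamma> n i j t)"
    by (rule main_result[OF assms(3) assms(4) assms(5) t])
qed

end
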